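(* The clique number of the skeleton of $\mathrm{PYR}(n)$ satisfies $\omega(\mathrm{PYR}(n))=\Theta(n^2)$ as $n\to\infty$; that is, there are constants $c_1,c_2>0$ such that $c_1 n^2\le \omega(\mathrm{PYR}(n))\le c_2 n^2$ for all sufficiently large $n$.
   Context: Let $K_n$ be the complete undirected graph on vertex set $\{1,\dots,n\}$ with edge set $E$. A Hamiltonian cycle $\langle 1,i_1,\dots,i_r,n,j_1,\dots,j_{n-r-2}\rangle$ is called a pyramidal tour if $i_1<i_2<\dots<i_r$ and $j_1>j_2>\dots>j_{n-r-2}$; tours are undirected. Let $PT_n$ be the set of all pyramidal tours. For $x\in PT_n$ its characteristic vector $x^v\in\mathbb{R}^E$ has $x^v_e=1$ if edge $e$ lies in $x$ and $0$ otherwise. The pyramidal tours polytope is $\mathrm{PYR}(n)=\operatorname{conv}\{x^v : x\in PT_n\}$. The skeleton of a polytope is the graph whose vertices are the polytope's vertices and whose edges are its one-dimensional faces. $\omega(\mathrm{PYR}(n))$ denotes the clique number (maximum number of pairwise adjacent vertices) of the skeleton of $\mathrm{PYR}(n)$. *)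

theory Defs
  imports "HOL-Analysis.Analysis" "HOL-Analysis.Finite_Function_Topology"
begin

text \<open>Edges of K_n are 2-element subsets of {1..n}; vectors in R^E are represented
  as finitely supported functions of type (nat set, real) poly_mapping, vanishing outside E.\<close>

definition pyramidal_seq :: "nat \<Rightarrow> nat list \<Rightarrow> bool" where
  "pyramidal_seq n xs \<longleftrightarrow>
     (\<exists>is js. xs = [1] @ is @ [n] @ js \<and> sorted_wrt (<) is \<and> sorted_wrt (>) js)
     \<and> distinct xs \<and> set xs = {1..n}"

definition tour_edges :: "nat list \<Rightarrow> nat set set" where
  "tour_edges xs = {{xs ! k, xs ! (Suc k mod length xs)} | k. k < length xs}"

definition char_vec :: "nat set set \<Rightarrow> (nat set, real) poly_mapping" where
  "char_vec T = Abs_poly_mapping (\<lambda>e. if e \<in> T then 1 else 0)"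

definition PT :: "nat \<Rightarrow> nat set set set" where
  "PT n = tour_edges ` {xs. pyramidal_seq n xs}"

definition PYR :: "nat \<Rightarrow> (nat set, real) poly_mapping set" where
  "PYR n = convex hull (char_vec ` PT n)"

definition skel_vertices :: "nat \<Rightarrow> (nat set, real) poly_mapping set" where
  "skel_vertices n = {x. x extreme_point_of PYR n}"

definition skel_adjacent :: "nat \<Rightarrow> (nat set, real) poly_mapping \<Rightarrow> (nat set, real) poly_mapping \<Rightarrow> bool" where
  "skel_adjacent n x y \<longleftrightarrow> x \<in> skel_vertices n \<and> y \<in> skel_vertices n \<and> x \<noteq> y
     \<and> closed_segment x y face_of PYR n"

definition clique_number_PYR :: "nat \<Rightarrow> nat" where
  "clique_number_PYR n = Max {card C | C. C \<subseteq> skel_vertices n \<and>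
      (\<forall>x\<in>C. \<forall>y\<in>C. x \<noteq> y \<longrightarrow> skel_adjacent n x y)}"

end

theory Submission
  imports Defs
begin

definition cnp :: "nat set \<Rightarrow> nat \<Rightarrow> nat \<Rightarrow> bool" where
  "cnp A a b \<longleftrightarrow> a \<in> A \<and> b \<in> A \<and> a < b \<and> (\<forall>c\<in>A. \<not> (a < c \<and> c < b))"

definition Aof :: "nat \<Rightarrow> nat set \<Rightarrow> nat set" where "Aof n S = S \<union> {1, n}"
definition Bof :: "nat \<Rightarrow> nat set \<Rightarrow> nat set" where "Bof n S = ({2..n-1} - S) \<union> {1, n}"
definition Tset :: "nat \<Rightarrow> nat set \<Rightarrow> nat set set" where
  "Tset n S = {{a,b} | a b. cnp (Aof n S) a b \<or> cnp (Bof n S) a b}"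

lemma Tset_memD: "e \<in> Tset n S \<Longrightarrow> \<exists>a b. e = {a,b} \<and> (cnp (Aof n S) a b \<or> cnp (Bof n S) a b)"
  unfolding Tset_def by (rule CollectD)

lemma Tset_memI: "cnp (Aof n S) a b \<or> cnp (Bof n S) a b \<Longrightarrow> {a,b} \<in> Tset n S"
  unfolding Tset_def by (rule CollectI) (rule exI[of _ a], rule exI[of _ b], simp)

lemma mem_Tset: "a < b \<Longrightarrow> {a,b} \<in> Tset n S \<longleftrightarrow> cnp (Aof n S) a b \<or> cnp (Bof n S) a b"
proof
  assume "{a,b} \<in> Tset n S"
  then obtain a' b' where ab: "{a,b} = {a',b'}" "cnp (Aof n S) a' b' \<or> cnp (Bof n S) a' b'"
    using Tset_memD by metis
  then have "a' < b'" by (auto simp: cnp_def)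
  assume "a < b"
  then have "a = a' \<and> b = b'" using ab(1) \<open>a' < b'\<close> by (metis doubleton_eq_iff not_less_iff_gr_or_eq)
  then show "cnp (Aof n S) a b \<or> cnp (Bof n S) a b" using ab(2) by simp
next
  assume "cnp (Aof n S) a b \<or> cnp (Bof n S) a b"
  then show "{a,b} \<in> Tset n S" by (rule Tset_memI)
qed

lemma Tset_cases: "e \<in> Tset n S \<Longrightarrow> \<exists>a b. a < b \<and> e = {a,b}"
proof -
  assume "e \<in> Tset n S"
  then obtain a b where "e = {a,b}" "cnp (Aof n S) a b \<or> cnp (Bof n S) a b"
    using Tset_memD by metis
  then show ?thesis unfolding cnp_def by blast
qed

lemma Tset_compl: "S \<subseteq> {2..n-1} \<Longrightarrow> Tset n ({2..n-1} - S) = Tset n S"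
proof -
  assume "S \<subseteq> {2..n-1}"
  then have "{2..n-1} - ({2..n-1} - S) = S" by auto
  then have "Aof n ({2..n-1} - S) = Bof n S" "Bof n ({2..n-1} - S) = Aof n S"
    by (auto simp: Aof_def Bof_def)
  then show ?thesis unfolding Tset_def by (simp only: disj_commute)
qed

lemma Tset_subset: "S \<subseteq> {2..n-1} \<Longrightarrow> 1 \<le> n \<Longrightarrow> Tset n S \<subseteq> Pow {1..n}"
proof -
  assume "S \<subseteq> {2..n-1}" "1 \<le> n"
  then have "Aof n S \<subseteq> {1..n}" "Bof n S \<subseteq> {1..n}" unfolding Aof_def Bof_def
    by (auto simp: subset_iff)
  note sub = this
  show ?thesis
  proof
    fix e assume "e \<in> Tset n S"
    then obtain a b where "e = {a,b}" "cnp (Aof n S) a b \<or> cnp (Bof n S) a b"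
      using Tset_memD by metis
    then show "e \<in> Pow {1..n}" using sub unfolding cnp_def by auto
  qed
qed

lemma Tset_finite: "S \<subseteq> {2..n-1} \<Longrightarrow> 1 \<le> n \<Longrightarrow> finite (Tset n S)"
  using Tset_subset by (meson finite_Pow_iff finite_atLeastAtMost rev_finite_subset)

lemma cnp_local:
  assumes "A \<inter> {a..b} = A' \<inter> {a..b}" shows "cnp A a b = cnp A' a b"
proof -
  have e: "c \<in> A \<longleftrightarrow> c \<in> A'" if "a \<le> c" "c \<le> b" for c
  proof -
    have "c \<in> A \<inter> {a..b} \<longleftrightarrow> c \<in> A' \<inter> {a..b}" using assms by simp
    then show ?thesis using that by simp
  qed
  show ?thesis
  proof (cases "a < b")
    case True
    have 1: "a \<in> A \<longleftrightarrow> a \<in> A'" "b \<in> A \<longleftrightarrow> b \<in> A'" using e[of a] e[of b] True by simp_all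
    have 2: "(\<forall>c\<in>A. \<not> (a < c \<and> c < b)) \<longleftrightarrow> (\<forall>c\<in>A'. \<not> (a < c \<and> c < b))"
    proof -
      have "\<forall>c. a < c \<and> c < b \<longrightarrow> (c \<in> A \<longleftrightarrow> c \<in> A')" using e by (simp add: less_imp_le)
      then show ?thesis by blast
    qed
    show ?thesis unfolding cnp_def using 1 2 by blast
  qed (simp add: cnp_def)
qed

lemma short_edge: "{a, Suc a} \<in> Tset n S \<longleftrightarrow> (a \<in> Aof n S \<and> Suc a \<in> Aof n S) \<or> (a \<in> Bof n S \<and> Suc a \<in> Bof n S)"
  by (subst mem_Tset) (auto simp: cnp_def)

lemma short_edge_in:
  assumes "S \<subseteq> {2..n-1}" "2 \<le> a" "Suc a \<le> n - 1"
  shows "{a, Suc a} \<in> Tset n S \<longleftrightarrow> (a \<in> S \<longleftrightarrow> Suc a \<in> S)"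
  using assms unfolding short_edge Aof_def Bof_def by auto


definition pedges :: "nat list \<Rightarrow> nat set set" where
  "pedges l = {{l!k, l!Suc k} | k. Suc k < length l}"

lemma pedges_Nil[simp]: "pedges [] = {}" and pedges_single[simp]: "pedges [x] = {}"
  unfolding pedges_def by auto

lemma pedges_Cons2: "pedges (x#y#l) = insert {x,y} (pedges (y#l))"
proof (rule set_eqI, rule iffI)
  fix e assume "e \<in> pedges (x#y#l)"
  then obtain k where k: "Suc k < length (x#y#l)" "e = {(x#y#l)!k, (x#y#l)!Suc k}"
    unfolding pedges_def by (rule CollectE) blast
  show "e \<in> insert {x,y} (pedges (y#l))"
  proof (cases k)
    case 0 then show ?thesis using k by simp
  next
    case (Suc j)
    then have "e = {(y#l)!j, (y#l)!Suc j}" "Suc j < length (y#l)" using k by auto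
    then show ?thesis unfolding pedges_def by blast
  qed
next
  fix e assume "e \<in> insert {x,y} (pedges (y#l))"
  then show "e \<in> pedges (x#y#l)"
  proof
    assume "e = {x,y}" then show ?thesis unfolding pedges_def
      by (intro CollectI exI[of _ 0]) simp
  next
    assume "e \<in> pedges (y#l)"
    then obtain k where k: "Suc k < length (y#l)" "e = {(y#l)!k, (y#l)!Suc k}"
      unfolding pedges_def by (rule CollectE) blast
    show ?thesis unfolding pedges_def using k by (intro CollectI exI[of _ "Suc k"]) simp
  qed
qed

lemma pedges_Cons: "pedges (x # l) = (if l = [] then {} else insert {x, hd l} (pedges l))"
  by (cases l) (auto simp: pedges_Cons2)

lemma pedges_append: "a \<noteq> [] \<Longrightarrow> pedges (a @ b) = pedges a \<union> pedges (last a # b)"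
proof (induction a rule: induct_list012)
  case (3 x y zs)
  then show ?case by (simp add: pedges_Cons2)
qed simp_all

lemma pedges_pair[simp]: "pedges [u, v] = {{u, v}}"
  by (simp add: pedges_Cons2)

lemma pedges_rev: "pedges (rev l) = pedges l"
proof (induction l)
  case (Cons x l)
  show ?case
  proof (cases "l = []")
    case False
    have "pedges (rev (x # l)) = pedges (rev l @ [x])" by simp
    also have "\<dots> = pedges (rev l) \<union> {{hd l, x}}" using False
      by (simp add: pedges_append last_rev)
    also have "\<dots> = pedges (x # l)" using Cons.IH False by (simp add: pedges_Cons insert_commute)
    finally show ?thesis .
  qed simp
qed simp

lemma cnp_insert_min:
  assumes "\<forall>z\<in>B. x < z" "y \<in> B" "\<forall>z\<in>B. y \<le> z"
  shows "cnp (insert x B) a b \<longleftrightarrow> (a = x \<and> b = y) \<or> cnp B a b"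
proof
  assume c: "cnp (insert x B) a b"
  show "(a = x \<and> b = y) \<or> cnp B a b"
  proof (cases "a = x")
    case True
    then have "b \<in> B" "x < b" using c unfolding cnp_def by auto
    then have "y \<le> b" using assms by simp
    have "\<not> (y < b)" using c True assms(1,2) unfolding cnp_def by auto
    then have "b = y" using \<open>y \<le> b\<close> by simp
    then show ?thesis using True by simp
  next
    case False
    then have "a \<in> B" using c unfolding cnp_def by auto
    then have "x < a" using assms by simp
    then have "b \<in> B" using c unfolding cnp_def by auto
    then show ?thesis using c \<open>a \<in> B\<close> unfolding cnp_def by auto
  qed
next
  assume "(a = x \<and> b = y) \<or> cnp B a b"
  then show "cnp (insert x B) a b"
  proof
    assume "a = x \<and> b = y"
    then show ?thesis using assms unfolding cnp_def by (auto simp: not_less)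
  next
    assume c: "cnp B a b"
    then have "x < a" using assms unfolding cnp_def by auto
    then show ?thesis using c unfolding cnp_def by auto
  qed
qed

lemma pedges_sorted: "sorted_wrt (<) l \<Longrightarrow> pedges l = {{a,b} | a b. cnp (set l) a b}"
proof (induction l)
  case Nil
  then show ?case by (simp add: cnp_def)
next
  case (Cons x l)
  show ?case
  proof (cases l)
    case Nil
    then show ?thesis by (auto simp: cnp_def)
  next
    case (Cons y l')
    have s: "sorted_wrt (<) l" using Cons.prems by simp
    have h1: "\<forall>z\<in>set l. x < z" using Cons.prems by simp
    have h3: "\<forall>z\<in>set l. y \<le> z" using s Cons by (auto simp: less_imp_le)
    have iff: "\<And>a b. cnp (insert x (set l)) a b \<longleftrightarrow> (a = x \<and> b = y) \<or> cnp (set l) a b"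
      by (rule cnp_insert_min[OF h1 _ h3]) (simp add: Cons)
    have "pedges (x # l) = insert {x, y} (pedges l)" using Cons by (simp add: pedges_Cons2)
    also have "\<dots> = insert {x,y} {{a,b} | a b. cnp (set l) a b}" using Cons.IH s by simp
    also have "\<dots> = {{a,b} | a b. cnp (set (x # l)) a b}" using iff by auto
    finally show ?thesis .
  qed
qed

lemma tour_edges_pedges: "xs \<noteq> [] \<Longrightarrow> tour_edges xs = pedges xs \<union> {{last xs, hd xs}}"
proof (rule set_eqI, rule iffI)
  fix e assume xs: "xs \<noteq> []" and e: "e \<in> tour_edges xs"
  from e obtain k where k: "k < length xs" "e = {xs ! k, xs ! (Suc k mod length xs)}"
    unfolding tour_edges_def by (rule CollectE) blast
  show "e \<in> pedges xs \<union> {{last xs, hd xs}}"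
  proof (cases "Suc k < length xs")
    case True
    then have "e = {xs!k, xs!Suc k}" using k by simp
    then show ?thesis unfolding pedges_def using True by blast
  next
    case False
    then have sk: "Suc k = length xs" using k by simp
    then have m0: "Suc k mod length xs = 0" by simp
    have "length xs - 1 = k" using sk by simp
    then have "e = {last xs, hd xs}" using k xs m0 by (simp add: last_conv_nth hd_conv_nth)
    then show ?thesis by simp
  qed
next
  fix e assume xs: "xs \<noteq> []" and "e \<in> pedges xs \<union> {{last xs, hd xs}}"
  then consider "e \<in> pedges xs" | "e = {last xs, hd xs}" by blast
  then show "e \<in> tour_edges xs"
  proof cases
    case 1
    then obtain k where k: "Suc k < length xs" "e = {xs ! k, xs ! Suc k}"
      unfolding pedges_def by (rule CollectE) blast
    then have "e = {xs ! k, xs ! (Suc k mod length xs)}" "k < length xs" by simp_all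
    then show ?thesis unfolding tour_edges_def by blast
  next
    case 2
    define k where "k = length xs - 1"
    have "k < length xs" "Suc k mod length xs = 0" using xs by (auto simp: k_def)
    moreover have "e = {xs ! k, xs ! 0}" using 2 xs by (simp add: k_def last_conv_nth hd_conv_nth)
    ultimately show ?thesis unfolding tour_edges_def by (metis (mono_tags, lifting) CollectI)
  qed
qed

lemma Tset_split: "Tset n S = {{a,b} | a b. cnp (Aof n S) a b} \<union> {{a,b} | a b. cnp (Bof n S) a b}"
  unfolding Tset_def by blast

lemma tour_edges_pyr:
  assumes xs: "xs = [1] @ ys @ [n] @ js" and si: "sorted_wrt (<) ys" and sj: "sorted_wrt (>) js"
    and d: "distinct xs" and st: "set xs = {1..n}"
  shows "tour_edges xs = Tset n (set ys)"
proof -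
  define a where "a = 1 # ys @ [n]"
  define b where "b = 1 # rev js @ [n]"
  have n1: "1 \<noteq> n" using d xs by auto
  have in_is: "\<And>z. z \<in> set ys \<Longrightarrow> 2 \<le> z \<and> z \<le> n - 1"
  proof -
    fix z assume z: "z \<in> set ys"
    then have "z \<in> {1..n}" using st xs by auto
    moreover have "z \<noteq> 1" "z \<noteq> n" using d xs z by auto
    ultimately show "2 \<le> z \<and> z \<le> n - 1" by auto
  qed
  have in_js: "\<And>z. z \<in> set js \<Longrightarrow> 2 \<le> z \<and> z \<le> n - 1"
  proof -
    fix z assume z: "z \<in> set js"
    then have "z \<in> {1..n}" using st xs by auto
    moreover have "z \<noteq> 1" "z \<noteq> n" using d xs z by auto
    ultimately show "2 \<le> z \<and> z \<le> n - 1" by auto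
  qed
  have n1': "1 < n"
  proof -
    have "n \<in> {1..n}" using st xs by (metis insertCI list.simps(15) set_append Un_iff)
    then show ?thesis using n1 by simp
  qed
  have b1: "\<forall>z\<in>set ys. 1 < z \<and> z < n" using in_is n1' by fastforce
  have b2: "\<forall>z\<in>set js. 1 < z \<and> z < n" using in_js n1' by fastforce
  have sa: "sorted_wrt (<) a" unfolding a_def using si b1 n1'
    by (simp add: sorted_wrt_append)
  have sb: "sorted_wrt (<) b" unfolding b_def using sj b2 n1'
    by (simp add: sorted_wrt_append sorted_wrt_rev)
  have seta: "set a = Aof n (set ys)" unfolding a_def Aof_def by auto
  have disj: "set ys \<inter> set js = {}" using d xs by auto
  have cover: "{2..n-1} \<subseteq> set ys \<union> set js"
  proof
    fix z assume "z \<in> {2..n-1}"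
    then have "z \<in> set xs" using st by auto
    moreover have "z \<noteq> 1" "z \<noteq> n" using \<open>z \<in> {2..n-1}\<close> by auto
    ultimately show "z \<in> set ys \<union> set js" using xs by auto
  qed
  have "set js = {2..n-1} - set ys" using disj cover in_js by auto
  then have setb: "set b = Bof n (set ys)" unfolding b_def Bof_def by auto
  have ne: "xs \<noteq> []" using xs by simp
  have lastxs: "last xs = last (n # js)" using xs by (cases js) auto
  have "pedges xs = pedges (a @ js)" using xs a_def by simp
  also have "\<dots> = pedges a \<union> pedges (last a # js)" by (rule pedges_append) (simp add: a_def)
  also have "last a = n" by (simp add: a_def)
  finally have pe: "pedges xs = pedges a \<union> pedges (n # js)" .
  have "pedges ((n # js) @ [1]) = pedges (n # js) \<union> {{last (n # js), 1}}"
    by (subst pedges_append) simp_all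
  moreover have "rev ((n # js) @ [1]) = b" unfolding b_def by simp
  ultimately have pb: "pedges b = pedges (n # js) \<union> {{last (n # js), 1}}"
    by (metis pedges_rev)
  have "tour_edges xs = pedges a \<union> pedges b"
    using tour_edges_pedges[OF ne] pe pb lastxs xs by auto
  also have "\<dots> = Tset n (set ys)"
    using pedges_sorted[OF sa] pedges_sorted[OF sb] seta setb Tset_split by simp
  finally show ?thesis .
qed

lemma PT_Tset: "T \<in> PT n \<Longrightarrow> \<exists>S. S \<subseteq> {2..n-1} \<and> T = Tset n S"
proof -
  assume "T \<in> PT n"
  then obtain xs where T: "T = tour_edges xs" and p: "pyramidal_seq n xs" unfolding PT_def by auto
  then obtain ys js where xs: "xs = [1] @ ys @ [n] @ js" "sorted_wrt (<) ys" "sorted_wrt (>) js"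
    and d: "distinct xs" and st: "set xs = {1..n}" unfolding pyramidal_seq_def by blast
  have "set ys \<subseteq> {2..n-1}"
  proof
    fix z assume z: "z \<in> set ys"
    then have "z \<in> {1..n}" using st xs by auto
    moreover have "z \<noteq> 1" "z \<noteq> n" using d xs z by auto
    ultimately show "z \<in> {2..n-1}" by auto
  qed
  then show ?thesis using tour_edges_pyr[OF xs d st] T by blast
qed

lemma Tset_PT:
  assumes n: "2 \<le> n" and S: "S \<subseteq> {2..n-1}"
  shows "Tset n S \<in> PT n"
proof -
  have fS: "finite S" using S finite_subset by blast
  define ys where "ys = sorted_list_of_set S"
  define js where "js = rev (sorted_list_of_set ({2..n-1} - S))"
  define xs where "xs = [1] @ ys @ [n] @ js"
  have si: "sorted_wrt (<) ys" unfolding ys_def by (simp add: sorted_list_of_set.strict_sorted_key_list_of_set)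
  have sj: "sorted_wrt (>) js" unfolding js_def
    by (simp add: sorted_wrt_rev sorted_list_of_set.strict_sorted_key_list_of_set)
  have setis: "set ys = S" unfolding ys_def using fS by simp
  have setjs: "set js = {2..n-1} - S" unfolding js_def by simp
  have Sb: "\<forall>x\<in>S. 2 \<le> x \<and> x \<le> n - 1" using S by auto
  have d: "distinct xs" unfolding xs_def using setis setjs Sb n
    by (auto simp: ys_def js_def)
  have st: "set xs = {1..n}"
  proof -
    have "set xs = {1, n} \<union> S \<union> ({2..n-1} - S)" unfolding xs_def using setis setjs by auto
    also have "\<dots> = {1..n}" using Sb n by auto
    finally show ?thesis .
  qed
  have "pyramidal_seq n xs" unfolding pyramidal_seq_def using si sj d st xs_def by blast
  moreover have "tour_edges xs = Tset n S" using tour_edges_pyr[OF xs_def si sj d st] setis by simp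
  ultimately show ?thesis unfolding PT_def by blast
qed


type_synonym vec = "(nat set, real) poly_mapping"

lemma lookup_scaleR_pm: "Poly_Mapping.lookup (r *\<^sub>R (x :: ('a, real) poly_mapping)) i = r * Poly_Mapping.lookup x i"
proof -
  have "finite {i. r * Poly_Mapping.lookup x i \<noteq> 0}"
    by (rule finite_subset[of _ "Poly_Mapping.keys x"]) (auto simp: Poly_Mapping.in_keys_iff)
  then show ?thesis by (simp add: scaleR_poly_mapping_def)
qed

lemma lookup_char_vec: "finite T \<Longrightarrow> Poly_Mapping.lookup (char_vec T) e = (if e \<in> T then 1 else 0)"
proof -
  assume "finite T"
  then have fin: "finite {e::nat set. (if e \<in> T then 1 else 0 :: real) \<noteq> 0}" by (simp add: rev_finite_subset)
  then have "Poly_Mapping.lookup (char_vec T) = (\<lambda>e. if e \<in> T then 1 else 0)" unfolding char_vec_def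
    using Abs_poly_mapping_inverse[of "\<lambda>e::nat set. if e \<in> T then 1 else 0 :: real"] fin by simp
  then show ?thesis by simp
qed

lemma char_vec_inj: "finite T \<Longrightarrow> finite T' \<Longrightarrow> char_vec T = char_vec T' \<Longrightarrow> T = T'"
proof -
  assume f: "finite T" "finite T'" and e: "char_vec T = char_vec T'"
  show "T = T'"
  proof (rule set_eqI)
    fix x
    have "Poly_Mapping.lookup (char_vec T) x = Poly_Mapping.lookup (char_vec T') x" using e by simp
    then show "x \<in> T \<longleftrightarrow> x \<in> T'" using f by (simp add: lookup_char_vec split: if_splits)
  qed
qed

definition zo :: "vec \<Rightarrow> bool" where "zo v \<longleftrightarrow> (\<forall>e. Poly_Mapping.lookup v e = 0 \<or> Poly_Mapping.lookup v e = 1)"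

lemma zo_char_vec: "finite T \<Longrightarrow> zo (char_vec T)"
  by (simp add: zo_def lookup_char_vec)

lemma not_in_segment:
  assumes "zo X" "zo Y" "zo Z" "Z \<noteq> X" "Z \<noteq> Y"
  shows "Z \<notin> closed_segment X Y"
proof
  assume "Z \<in> closed_segment X Y"
  then obtain u where u: "0 \<le> u" "u \<le> 1" "Z = (1 - u) *\<^sub>R X + u *\<^sub>R Y" by (auto simp: in_segment)
  have lk: "\<And>e. Poly_Mapping.lookup Z e = (1 - u) * Poly_Mapping.lookup X e + u * Poly_Mapping.lookup Y e"
    using u(3) by (simp add: lookup_add lookup_scaleR_pm)
  have "\<exists>e. Poly_Mapping.lookup Z e \<noteq> Poly_Mapping.lookup X e"
  proof (rule ccontr)
    assume "\<not> (\<exists>e. Poly_Mapping.lookup Z e \<noteq> Poly_Mapping.lookup X e)"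
    then have "Z = X" by (intro poly_mapping_eqI) simp
    then show False using assms(4) by simp
  qed
  then obtain e where e: "Poly_Mapping.lookup Z e \<noteq> Poly_Mapping.lookup X e" by blast
  define a where "a = Poly_Mapping.lookup X e"
  define b where "b = Poly_Mapping.lookup Y e"
  define c where "c = Poly_Mapping.lookup Z e"
  have ab: "a = 0 \<or> a = 1" "b = 0 \<or> b = 1" "c = 0 \<or> c = 1"
    using assms(1,2,3) unfolding zo_def a_def b_def c_def by auto
  have ce1: "c = (1 - u) * a + u * b" unfolding a_def b_def c_def by (rule lk)
  have ce2: "c \<noteq> a" unfolding a_def c_def by (rule e)
  note ce = ce1 ce2
  have "a \<noteq> b"
  proof
    assume "a = b" then have "c = a" using ce(1) by (simp add: algebra_simps)
    then show False using ce(2) by simp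
  qed
  then have "(a = 0 \<and> b = 1) \<or> (a = 1 \<and> b = 0)" using ab by auto
  then have "c = u \<or> c = 1 - u" using ce(1) by auto
  then have "u = 0 \<or> u = 1" using ab(3) by auto
  then show False
  proof
    assume "u = 0" then have "Z = X" using u by simp
    then show False using assms by simp
  next
    assume "u = 1" then have "Z = Y" using u by simp
    then show False using assms by simp
  qed
qed

lemma nonadj:
  assumes V: "X \<in> V" "Y \<in> V" "Z \<in> V" "W \<in> V" and z: "zo X" "zo Y" "zo Z"
    and eq: "X + Y = Z + W" and ne: "Z \<noteq> X" "Z \<noteq> Y"
  shows "\<not> closed_segment X Y face_of convex hull V"
proof
  assume F: "closed_segment X Y face_of convex hull V"
  have M: "midpoint X Y \<in> closed_segment X Y" by simp
  have MZ: "midpoint X Y = midpoint Z W" using eq by (simp add: midpoint_def)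
  have "Z \<in> closed_segment X Y"
  proof (cases "Z = W")
    case True
    then have "midpoint X Y = Z" using MZ by (simp add: midpoint_def scaleR_2[symmetric])
    then show ?thesis using M by simp
  next
    case False
    then have "midpoint X Y \<in> open_segment Z W" using MZ by simp
    moreover have "Z \<in> convex hull V" "W \<in> convex hull V" using V by (auto intro: hull_inc)
    ultimately show ?thesis using face_ofD[OF F] M by blast
  qed
  then show False using not_in_segment[OF z ne] by simp
qed

lemma exposed_face:
  fixes f :: "vec \<Rightarrow> real"
  assumes lin: "\<And>u v a b. f (u *\<^sub>R a + v *\<^sub>R b) = u * f a + v * f b"
    and sub: "Top \<subseteq> V"
    and top: "\<And>x. x \<in> Top \<Longrightarrow> f x = K"
    and rest: "\<And>x. x \<in> V \<Longrightarrow> x \<notin> Top \<Longrightarrow> f x \<le> K - 1"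
  shows "convex hull Top face_of convex hull V"
proof -
  define Q where "Q = {p. f p \<le> K \<and> (f p = K \<longrightarrow> p \<in> convex hull Top)}"
  have cQ: "convex Q"
  proof (rule convexI)
    fix x y and u v :: real assume x: "x \<in> Q" and y: "y \<in> Q" and u: "0 \<le> u" and v: "0 \<le> v" and uv: "u + v = 1"
    have fx: "f x \<le> K" and fy: "f y \<le> K" using x y by (auto simp: Q_def)
    have fz: "f (u *\<^sub>R x + v *\<^sub>R y) = u * f x + v * f y" by (rule lin)
    have le: "u * f x + v * f y \<le> K"
    proof -
      have "u * f x \<le> u * K" using u fx by (simp add: mult_left_mono)
      moreover have "v * f y \<le> v * K" using v fy by (simp add: mult_left_mono)
      ultimately show ?thesis using uv by (metis add_mono distrib_right mult_1)
    qed
    have "u * f x + v * f y = K \<longrightarrow> u *\<^sub>R x + v *\<^sub>R y \<in> convex hull Top"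
    proof
      assume eqK: "u * f x + v * f y = K"
      show "u *\<^sub>R x + v *\<^sub>R y \<in> convex hull Top"
      proof (cases "u = 0")
        case True
        then have "v = 1" using uv by simp
        then have "f y = K" using eqK True by simp
        then have "y \<in> convex hull Top" using y by (simp add: Q_def)
        then show ?thesis using True \<open>v = 1\<close> by simp
      next
        case False
        then have u0: "u > 0" using u by simp
        show ?thesis
        proof (cases "v = 0")
          case True
          then have "u = 1" using uv by simp
          then have "f x = K" using eqK True by simp
          then have "x \<in> convex hull Top" using x by (simp add: Q_def)
          then show ?thesis using True \<open>u = 1\<close> by simp
        next
          case False
          then have v0: "v > 0" using v by simp
          have "u * (K - f x) + v * (K - f y) = (u + v) * K - (u * f x + v * f y)" by (simp add: algebra_simps)
          then have "u * (K - f x) + v * (K - f y) = 0" using eqK uv by simp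
          moreover have "u * (K - f x) \<ge> 0" "v * (K - f y) \<ge> 0" using u v fx fy by simp_all
          ultimately have "u * (K - f x) = 0" "v * (K - f y) = 0" by linarith+
          then have "f x = K" "f y = K" using u0 v0 by simp_all
          then have "x \<in> convex hull Top" "y \<in> convex hull Top" using x y by (simp_all add: Q_def)
          then show ?thesis using u v uv convex_convex_hull convexD by blast
        qed
      qed
    qed
    then show "u *\<^sub>R x + v *\<^sub>R y \<in> Q" unfolding Q_def using fz le by simp
  qed
  have VQ: "V \<subseteq> Q"
  proof
    fix x assume "x \<in> V"
    then show "x \<in> Q"
    proof (cases "x \<in> Top")
      case True then show ?thesis using top by (simp add: Q_def hull_inc)
    next
      case False then show ?thesis using rest[OF \<open>x \<in> V\<close>] by (simp add: Q_def)
    qed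
  qed
  have hQ: "convex hull V \<subseteq> Q" using hull_minimal[of V Q convex] VQ cQ by blast
  have cK: "convex {p. f p = K}"
  proof (rule convexI)
    fix x y and u v :: real assume "x \<in> {p. f p = K}" "y \<in> {p. f p = K}" "0 \<le> u" "0 \<le> v" "u + v = 1"
    then show "u *\<^sub>R x + v *\<^sub>R y \<in> {p. f p = K}" using lin by (simp add: distrib_right[symmetric])
  qed
  have hK: "convex hull Top \<subseteq> {p. f p = K}" by (rule hull_minimal) (use top cK in auto)
  show ?thesis unfolding face_of_def
  proof (intro conjI)
    show "convex hull Top \<subseteq> convex hull V" by (rule hull_mono[OF sub])
    show "convex (convex hull Top)" by simp
  next
    show "\<forall>a\<in>convex hull V. \<forall>b\<in>convex hull V. \<forall>x\<in>convex hull Top. x \<in> open_segment a b \<longrightarrow> a \<in> convex hull Top \<and> b \<in> convex hull Top"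
    proof (intro ballI impI)
    fix a b x assume a: "a \<in> convex hull V" and b: "b \<in> convex hull V" and x: "x \<in> convex hull Top"
      and xs: "x \<in> open_segment a b"
    obtain u where u: "0 < u" "u < 1" "x = (1 - u) *\<^sub>R a + u *\<^sub>R b" using xs by (auto simp: in_segment)
    have fa: "f a \<le> K" and fb: "f b \<le> K" using a b hQ by (auto simp: Q_def)
    have "f x = K" using x hK by auto
    then have "(1 - u) * f a + u * f b = K" using u(3) lin by simp
    then have "(1 - u) * (K - f a) + u * (K - f b) = 0" by (simp add: algebra_simps)
    moreover have "(1 - u) * (K - f a) \<ge> 0" "u * (K - f b) \<ge> 0" using u fa fb by simp_all
    ultimately have "(1 - u) * (K - f a) = 0" "u * (K - f b) = 0" by linarith+
    then have "f a = K" "f b = K" using u by simp_all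
    then show "a \<in> convex hull Top \<and> b \<in> convex hull Top" using a b hQ by (auto simp: Q_def)
    qed
  qed
qed


definition Sp :: "nat \<Rightarrow> nat \<Rightarrow> nat \<Rightarrow> nat set" where
  "Sp n p q = {2..p} \<union> {Suc q..n-1}"

lemma Sp_sub: "p < q \<Longrightarrow> q + 2 \<le> n \<Longrightarrow> Sp n p q \<subseteq> {2..n-1}" by (auto simp: Sp_def)

lemma A_Sp: "2 \<le> p \<Longrightarrow> p < q \<Longrightarrow> q + 2 \<le> n \<Longrightarrow>
   c \<in> Aof n (Sp n p q) \<longleftrightarrow> (1 \<le> c \<and> c \<le> p) \<or> (q < c \<and> c \<le> n)"
  by (auto simp: Aof_def Sp_def)

lemma B_Sp: "2 \<le> p \<Longrightarrow> p < q \<Longrightarrow> q + 2 \<le> n \<Longrightarrow>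
   c \<in> Bof n (Sp n p q) \<longleftrightarrow> c = 1 \<or> (p < c \<and> c \<le> q) \<or> c = n"
  by (auto simp: Bof_def Sp_def)

lemma arA:
  fixes a b p q n :: nat
  assumes F1: "(1 \<le> a \<and> a \<le> p) \<or> (q < a \<and> a \<le> n)" and F2: "(1 \<le> b \<and> b \<le> p) \<or> (q < b \<and> b \<le> n)"
    and F3: "\<not> ((1 \<le> Suc a \<and> Suc a \<le> p) \<or> (q < Suc a \<and> Suc a \<le> n))"
    and F4: "\<not> ((1 \<le> b - 1 \<and> b - 1 \<le> p) \<or> (q < b - 1 \<and> b - 1 \<le> n))"
    and ab: "a + 2 \<le> b" and pq: "2 \<le> p" "p < q" "q + 2 \<le> n"
  shows "a = p \<and> b = Suc q"
proof -
  have bn: "b \<le> n" using F2 pq by auto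
  have "a \<le> p"
  proof (rule ccontr)
    assume "\<not> a \<le> p" then have "q < a \<and> a \<le> n" using F1 by auto
    then have "q < Suc a" "Suc a \<le> n" using ab bn by auto
    then show False using F3 by auto
  qed
  then have "\<not> Suc a \<le> p" using F3 by auto
  then have a: "a = p" using \<open>a \<le> p\<close> by simp
  have "\<not> b \<le> p" using a ab by simp
  then have "q < b" using F2 by auto
  have "b - 1 \<le> n" "1 \<le> b - 1" using bn ab by auto
  then have "\<not> q < b - 1" using F4 by auto
  then have "b = Suc q" using \<open>q < b\<close> by simp
  then show ?thesis using a by simp
qed
lemma arB:
  fixes a b p q n :: nat
  assumes F1: "a = 1 \<or> (p < a \<and> a \<le> q) \<or> a = n" and F2: "b = 1 \<or> (p < b \<and> b \<le> q) \<or> b = n"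
    and F3: "\<not> (Suc a = 1 \<or> (p < Suc a \<and> Suc a \<le> q) \<or> Suc a = n)"
    and F4: "\<not> (b - 1 = 1 \<or> (p < b - 1 \<and> b - 1 \<le> q) \<or> b - 1 = n)"
    and F5: "(Suc p = 1 \<or> (p < Suc p \<and> Suc p \<le> q) \<or> Suc p = n) \<longrightarrow> \<not> (a < Suc p \<and> Suc p < b)"
    and ab: "a + 2 \<le> b" and pq: "2 \<le> p" "p < q" "q + 2 \<le> n"
  shows "(a = 1 \<and> b = Suc p) \<or> (a = q \<and> b = n)"
proof -
  have bn: "b \<le> n" using F2 pq by auto
  have b1: "b \<noteq> 1" using ab by simp
  have an: "a \<noteq> n" using ab bn by simp
  have "a = 1 \<or> (p < a \<and> a \<le> q)" using F1 an by simp
  then show ?thesis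
  proof
    assume a1: "a = 1"
    have "\<not> (a < Suc p \<and> Suc p < b)" using F5 pq by simp
    then have "b \<le> Suc p" using a1 pq by simp
    moreover have "\<not> b \<le> p"
    proof
      assume "b \<le> p"
      then have "b = 1 \<or> (p < b \<and> b \<le> q) \<or> b = n" using F2 by simp
      then show False using \<open>b \<le> p\<close> b1 pq by auto
    qed
    ultimately have "b = Suc p" by simp
    then show ?thesis using a1 by simp
  next
    assume a2: "p < a \<and> a \<le> q"
    have "\<not> Suc a \<le> q" using F3 a2 by auto
    then have aq: "a = q" using a2 by simp
    have "b = n"
    proof (rule ccontr)
      assume "b \<noteq> n"
      then have "b = 1 \<or> (p < b \<and> b \<le> q)" using F2 by simp
      then show False using aq ab b1 by auto
    qed
    then show ?thesis using aq by simp
  qed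
qed

lemma LE_Sp:
  assumes pq: "2 \<le> p" "p < q" "q + 2 \<le> n" and ab: "a + 2 \<le> b" and e: "{a,b} \<in> Tset n (Sp n p q)"
  shows "(a = 1 \<and> b = Suc p) \<or> (a = p \<and> b = Suc q) \<or> (a = q \<and> b = n)"
proof -
  have ab': "a < b" using ab by simp
  have "cnp (Aof n (Sp n p q)) a b \<or> cnp (Bof n (Sp n p q)) a b" using e mem_Tset[OF ab'] by blast
  then show ?thesis
  proof
    assume c: "cnp (Aof n (Sp n p q)) a b"
    define A where "A = Aof n (Sp n p q)"
    have cc: "a \<in> A" "b \<in> A" "\<forall>c\<in>A. \<not> (a < c \<and> c < b)" using c unfolding cnp_def A_def by auto
    have "Suc a \<notin> A"
    proof
      assume "Suc a \<in> A" then have "\<not> (a < Suc a \<and> Suc a < b)" using cc(3) by blast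
      then show False using ab by simp
    qed
    moreover have "b - 1 \<notin> A"
    proof
      assume "b - 1 \<in> A" then have "\<not> (a < b - 1 \<and> b - 1 < b)" using cc(3) by blast
      then show False using ab by simp
    qed
    ultimately have m: "a \<in> Aof n (Sp n p q)" "b \<in> Aof n (Sp n p q)" "Suc a \<notin> Aof n (Sp n p q)" "b - 1 \<notin> Aof n (Sp n p q)"
      using cc unfolding A_def by auto
    then have "(1 \<le> a \<and> a \<le> p) \<or> (q < a \<and> a \<le> n)" "(1 \<le> b \<and> b \<le> p) \<or> (q < b \<and> b \<le> n)"
      "\<not> ((1 \<le> Suc a \<and> Suc a \<le> p) \<or> (q < Suc a \<and> Suc a \<le> n))"
      "\<not> ((1 \<le> b - 1 \<and> b - 1 \<le> p) \<or> (q < b - 1 \<and> b - 1 \<le> n))"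
      using m by (simp_all only: A_Sp[OF pq])
    then have "a = p \<and> b = Suc q" using ab pq by (rule arA)
    then show ?thesis by simp
  next
    assume c: "cnp (Bof n (Sp n p q)) a b"
    define A where "A = Bof n (Sp n p q)"
    have cc: "a \<in> A" "b \<in> A" "\<forall>c\<in>A. \<not> (a < c \<and> c < b)" using c unfolding cnp_def A_def by auto
    have "Suc a \<notin> A"
    proof
      assume "Suc a \<in> A" then have "\<not> (a < Suc a \<and> Suc a < b)" using cc(3) by blast
      then show False using ab by simp
    qed
    moreover have "b - 1 \<notin> A"
    proof
      assume "b - 1 \<in> A" then have "\<not> (a < b - 1 \<and> b - 1 < b)" using cc(3) by blast
      then show False using ab by simp
    qed
    moreover have "Suc p \<in> A \<longrightarrow> \<not> (a < Suc p \<and> Suc p < b)" using cc(3) by blast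
    ultimately have m: "a \<in> Bof n (Sp n p q)" "b \<in> Bof n (Sp n p q)" "Suc a \<notin> Bof n (Sp n p q)" "b - 1 \<notin> Bof n (Sp n p q)"
      "Suc p \<in> Bof n (Sp n p q) \<longrightarrow> \<not> (a < Suc p \<and> Suc p < b)"
      using cc unfolding A_def by auto
    then have "a = 1 \<or> (p < a \<and> a \<le> q) \<or> a = n" "b = 1 \<or> (p < b \<and> b \<le> q) \<or> b = n"
      "\<not> (Suc a = 1 \<or> (p < Suc a \<and> Suc a \<le> q) \<or> Suc a = n)"
      "\<not> (b - 1 = 1 \<or> (p < b - 1 \<and> b - 1 \<le> q) \<or> b - 1 = n)"
      "(Suc p = 1 \<or> (p < Suc p \<and> Suc p \<le> q) \<or> Suc p = n) \<longrightarrow> \<not> (a < Suc p \<and> Suc p < b)"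
      using m by (simp_all only: B_Sp[OF pq])
    then have "(a = 1 \<and> b = Suc p) \<or> (a = q \<and> b = n)" using ab pq by (rule arB)
    then show ?thesis by blast
  qed
qed

lemma LI_Sp:
  assumes pq: "2 \<le> p" "p < q" "q + 2 \<le> n"
  shows "{1, Suc p} \<in> Tset n (Sp n p q)" "{q, n} \<in> Tset n (Sp n p q)"
proof -
  have "cnp (Bof n (Sp n p q)) 1 (Suc p)" unfolding cnp_def using pq by (auto simp: B_Sp[OF pq])
  then show "{1, Suc p} \<in> Tset n (Sp n p q)" by (rule Tset_memI[OF disjI2])
  have "cnp (Bof n (Sp n p q)) q n" unfolding cnp_def using pq by (auto simp: B_Sp[OF pq])
  then show "{q, n} \<in> Tset n (Sp n p q)" by (rule Tset_memI[OF disjI2])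
qed

lemma Sp_inj:
  assumes pq: "2 \<le> p" "p < q" "q + 2 \<le> n" and pq': "2 \<le> p'" "p' < q'" "q' + 2 \<le> n"
    and eq: "Tset n (Sp n p q) = Tset n (Sp n p' q')"
  shows "p = p' \<and> q = q'"
proof -
  have "{1, Suc p} \<in> Tset n (Sp n p' q')" using LI_Sp(1)[OF pq] eq by simp
  then have "(1 = 1 \<and> Suc p = Suc p') \<or> (1 = p' \<and> Suc p = Suc q') \<or> (1 = q' \<and> Suc p = n)"
    using LE_Sp[OF pq', of 1 "Suc p"] pq by simp
  then have 1: "p = p'" using pq' by auto
  have "{q, n} \<in> Tset n (Sp n p' q')" using LI_Sp(2)[OF pq] eq by simp
  then have "(q = 1 \<and> n = Suc p') \<or> (q = p' \<and> n = Suc q') \<or> (q = q' \<and> n = n)"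
    using LE_Sp[OF pq', of q n] pq by simp
  then have "q = q'" using pq pq' 1 by auto
  then show ?thesis using 1 by simp
qed


lemma memA: "c \<in> Aof n S \<longleftrightarrow> c \<in> S \<or> c = 1 \<or> c = n" by (auto simp: Aof_def)
lemma memB: "c \<in> Bof n S \<longleftrightarrow> (2 \<le> c \<and> c \<le> n - 1 \<and> c \<notin> S) \<or> c = 1 \<or> c = n" by (auto simp: Bof_def)

lemma cnp_LeastI:
  assumes "x \<in> A" "w \<in> A" "x < w" "y = (LEAST c. c \<in> A \<and> x < c)"
  shows "cnp A x y" "\<And>c. x < c \<Longrightarrow> c < y \<Longrightarrow> c \<notin> A"
proof -
  have h: "y \<in> A \<and> x < y" using LeastI[of "\<lambda>c. c \<in> A \<and> x < c" w] assms by simp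
  have m: "\<And>c. c \<in> A \<Longrightarrow> x < c \<Longrightarrow> y \<le> c" using Least_le[of "\<lambda>c. c \<in> A \<and> x < c"] assms(4) by simp
  show "\<And>c. x < c \<Longrightarrow> c < y \<Longrightarrow> c \<notin> A" using m by (meson not_le)
  then show "cnp A x y" unfolding cnp_def using h assms(1) by blast
qed

lemma uniq_core:
  assumes p1: "2 \<le> p1" "p1 \<le> m" "m < q1" "q1 + 2 \<le> n"
    and p2: "2 \<le> p2" "p2 \<le> m" "m < q2" "q2 + 2 \<le> n"
    and S: "S \<subseteq> {2..n-1}" "2 \<in> S"
    and sub: "Tset n S \<subseteq> Tset n (Sp n p1 q1) \<union> Tset n (Sp n p2 q2)"
  shows "S = Sp n p1 q1 \<or> S = Sp n p2 q2"
proof -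
  have pq1: "2 \<le> p1" "p1 < q1" "q1 + 2 \<le> n" using p1 by auto
  have pq2: "2 \<le> p2" "p2 < q2" "q2 + 2 \<le> n" using p2 by auto
  have L: "(a = 1 \<and> b = Suc p1) \<or> (a = p1 \<and> b = Suc q1) \<or> (a = q1 \<and> b = n) \<or>
           (a = 1 \<and> b = Suc p2) \<or> (a = p2 \<and> b = Suc q2) \<or> (a = q2 \<and> b = n)"
    if "a + 2 \<le> b" "{a,b} \<in> Tset n S" for a b
  proof -
    have "{a,b} \<in> Tset n (Sp n p1 q1) \<or> {a,b} \<in> Tset n (Sp n p2 q2)" using sub that(2) by blast
    then show ?thesis
    proof
      assume "{a,b} \<in> Tset n (Sp n p1 q1)"
      from LE_Sp[OF pq1 that(1) this] show ?thesis by blast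
    next
      assume "{a,b} \<in> Tset n (Sp n p2 q2)"
      from LE_Sp[OF pq2 that(1) this] show ?thesis by blast
    qed
  qed
  have n5: "5 \<le> n" using pq1 by simp
  have Sb: "\<And>c. c \<in> S \<Longrightarrow> 2 \<le> c \<and> c \<le> n - 1" using S(1) by auto
  define A where "A = Aof n S"
  define B where "B = Bof n S"
  have nA: "n \<in> A" "1 \<in> A" and nB: "n \<in> B" "1 \<in> B" unfolding A_def B_def by (simp_all add: memA memB)
  define s where "s = (LEAST c. c \<in> B \<and> 1 < c)"
  have cs: "cnp B 1 s" and ms: "\<And>c. 1 < c \<Longrightarrow> c < s \<Longrightarrow> c \<notin> B"
    using cnp_LeastI[OF nB(2) nB(1) _ s_def] n5 by auto
  have "2 \<notin> B" using S(2) n5 unfolding B_def memB by simp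
  moreover have "s \<in> B" "1 < s" using cs unfolding cnp_def by auto
  ultimately have "s \<noteq> 2" "1 < s" by auto
  then have s3: "1 + 2 \<le> s" by simp
  have "{1, s} \<in> Tset n S" using cs unfolding B_def by (intro Tset_memI) simp
  from L[OF s3 this] have "s = Suc p1 \<or> s = Suc p2" using pq1 pq2 by auto
  then obtain P where P: "P = p1 \<or> P = p2" and sP: "s = Suc P" by blast
  have Pm: "2 \<le> P" "P \<le> m" using P p1 p2 by auto
  have low: "c \<in> S" if "2 \<le> c" "c \<le> P" for c
  proof -
    have "c \<notin> B" using ms[of c] that sP by simp
    moreover have "c \<le> n - 1" using that Pm p1 by simp
    ultimately show ?thesis using that unfolding B_def memB by auto
  qed
  have PS: "P \<in> S" using low Pm by simp
  have SPn: "Suc P \<notin> S"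
  proof -
    have "Suc P \<in> B" using \<open>s \<in> B\<close> sP by simp
    moreover have "Suc P \<noteq> 1" "Suc P \<noteq> n" using Pm p1 by auto
    ultimately show ?thesis unfolding B_def memB by simp
  qed
  define r where "r = (LEAST c. c \<in> A \<and> P < c)"
  have PA: "P \<in> A" using PS unfolding A_def memA by simp
  have cr: "cnp A P r" and mr: "\<And>c. P < c \<Longrightarrow> c < r \<Longrightarrow> c \<notin> A"
    using cnp_LeastI[OF PA nA(1) _ r_def] Pm p1 by auto
  have "r \<in> A" "P < r" using cr unfolding cnp_def by auto
  moreover have "Suc P \<notin> A" using SPn Pm p1 unfolding A_def memA by auto
  ultimately have "r \<noteq> Suc P" "P < r" by auto
  then have r2: "P + 2 \<le> r" by simp
  have "{P, r} \<in> Tset n S" using cr unfolding A_def by (intro Tset_memI) simp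
  from L[OF r2 this] have "(P = p1 \<and> r = Suc q1) \<or> (P = p2 \<and> r = Suc q2)" using Pm p1 p2 by auto
  then obtain Q where PQ: "(P = p1 \<and> Q = q1) \<or> (P = p2 \<and> Q = q2)" and rQ: "r = Suc Q" by blast
  have Qm: "m < Q" "Q + 2 \<le> n" using PQ p1 p2 by auto
  have mid: "c \<notin> S" if "P < c" "c \<le> Q" for c
    using mr[of c] that rQ unfolding A_def memA by simp
  have SQ: "Suc Q \<in> S"
  proof -
    have "Suc Q \<in> A" using \<open>r \<in> A\<close> rQ by simp
    moreover have "Suc Q \<noteq> 1" "Suc Q \<noteq> n" using Qm by auto
    ultimately show ?thesis unfolding A_def memA by simp
  qed
  have QB: "Q \<in> B"
  proof -
    have "Q \<notin> S" using mid[of Q] Pm Qm by simp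
    moreover have "2 \<le> Q" "Q \<le> n - 1" using Pm Qm by auto
    ultimately show ?thesis unfolding B_def memB by simp
  qed
  define t where "t = (LEAST c. c \<in> B \<and> Q < c)"
  have ct: "cnp B Q t" and mt: "\<And>c. Q < c \<Longrightarrow> c < t \<Longrightarrow> c \<notin> B"
    using cnp_LeastI[OF QB nB(1) _ t_def] Qm by auto
  have "t \<in> B" "Q < t" using ct unfolding cnp_def by auto
  moreover have "Suc Q \<notin> B" using SQ Qm unfolding B_def memB by auto
  ultimately have "t \<noteq> Suc Q" "Q < t" by auto
  then have t2: "Q + 2 \<le> t" by simp
  have "{Q, t} \<in> Tset n S" using ct unfolding B_def by (intro Tset_memI) simp
  from L[OF t2 this] have tn: "t = n" using Qm p1 p2 by auto
  have high: "c \<in> S" if "Q < c" "c \<le> n - 1" for c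
  proof -
    have "c \<notin> B" using mt[of c] that tn by simp
    moreover have "2 \<le> c" using that Qm by simp
    ultimately show ?thesis using that unfolding B_def memB by auto
  qed
  have "S = Sp n P Q"
  proof (rule set_eqI)
    fix c
    show "c \<in> S \<longleftrightarrow> c \<in> Sp n P Q"
    proof
      assume c: "c \<in> S"
      then have "2 \<le> c" "c \<le> n - 1" using Sb by auto
      moreover have "\<not> (P < c \<and> c \<le> Q)" using mid c by blast
      ultimately show "c \<in> Sp n P Q" unfolding Sp_def by auto
    next
      assume "c \<in> Sp n P Q"
      then have "(2 \<le> c \<and> c \<le> P) \<or> (Q < c \<and> c \<le> n - 1)" unfolding Sp_def by auto
      then show "c \<in> S" using low high by blast
    qed
  qed
  then show ?thesis using PQ by auto
qed

lemma uniq: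
  assumes p1: "2 \<le> p1" "p1 \<le> m" "m < q1" "q1 + 2 \<le> n"
    and p2: "2 \<le> p2" "p2 \<le> m" "m < q2" "q2 + 2 \<le> n"
    and S: "S \<subseteq> {2..n-1}"
    and sub: "Tset n S \<subseteq> Tset n (Sp n p1 q1) \<union> Tset n (Sp n p2 q2)"
  shows "Tset n S = Tset n (Sp n p1 q1) \<or> Tset n S = Tset n (Sp n p2 q2)"
proof (cases "2 \<in> S")
  case True
  then show ?thesis using uniq_core[OF p1 p2 S True sub] by auto
next
  case False
  define S' where "S' = {2..n-1} - S"
  have S': "S' \<subseteq> {2..n-1}" "2 \<in> S'" using False p1 unfolding S'_def by auto
  have eq: "Tset n S' = Tset n S" unfolding S'_def by (rule Tset_compl[OF S])
  then show ?thesis using uniq_core[OF p1 p2 S'] sub by auto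
qed


definition Bd :: "nat \<Rightarrow> nat set set \<Rightarrow> nat set" where
  "Bd n T = {i. 2 \<le> i \<and> i + 2 \<le> n \<and> {i, Suc i} \<notin> T}"

lemma Bd_Tset: "S \<subseteq> {2..n-1} \<Longrightarrow> i \<in> Bd n (Tset n S) \<longleftrightarrow> 2 \<le> i \<and> i + 2 \<le> n \<and> \<not> (i \<in> S \<longleftrightarrow> Suc i \<in> S)"
proof (cases "2 \<le> i \<and> i + 2 \<le> n")
  case True
  assume S: "S \<subseteq> {2..n-1}"
  have "Suc i \<le> n - 1" "2 \<le> i" using True by auto
  from short_edge_in[OF S this(2) this(1)] show ?thesis using True by (simp add: Bd_def)
qed (auto simp: Bd_def)

lemma Bd_inj:
  assumes S1: "S1 \<subseteq> {2..n-1}" and S2: "S2 \<subseteq> {2..n-1}" and eq: "Bd n (Tset n S1) = Bd n (Tset n S2)"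
  shows "Tset n S1 = Tset n S2"
proof -
  define g where "g i = (i \<in> S1 \<longleftrightarrow> i \<in> S2)" for i
  have step: "g (Suc i) = g i" if "2 \<le> i" "i + 2 \<le> n" for i
  proof -
    have "(i \<in> S1 \<longleftrightarrow> Suc i \<in> S1) \<longleftrightarrow> (i \<in> S2 \<longleftrightarrow> Suc i \<in> S2)"
      using eq Bd_Tset[OF S1, of i] Bd_Tset[OF S2, of i] that by blast
    then show ?thesis unfolding g_def by blast
  qed
  have all: "\<forall>k. 2 + k \<le> n - 1 \<longrightarrow> g (2 + k) = g 2"
  proof
    fix k show "2 + k \<le> n - 1 \<longrightarrow> g (2 + k) = g 2"
    proof (induction k)
      case (Suc k)
      show ?case
      proof
        assume "2 + Suc k \<le> n - 1"
        then have "g (Suc (2 + k)) = g (2 + k)" by (intro step) auto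
        then show "g (2 + Suc k) = g 2" using Suc \<open>2 + Suc k \<le> n - 1\<close> by simp
      qed
    qed simp
  qed
  have gi: "g i = g 2" if "2 \<le> i" "i \<le> n - 1" for i
  proof -
    have e: "2 + (i - 2) = i" using that by simp
    show ?thesis using all[rule_format, of "i - 2"] that unfolding e by simp
  qed
  show ?thesis
  proof (cases "g 2")
    case True
    have "S1 = S2"
    proof (rule set_eqI)
      fix x show "x \<in> S1 \<longleftrightarrow> x \<in> S2"
      proof (cases "2 \<le> x \<and> x \<le> n - 1")
        case True then show ?thesis using gi[of x] \<open>g 2\<close> unfolding g_def by auto
      next
        case False then show ?thesis using S1 S2 by auto
      qed
    qed
    then show ?thesis by simp
  next
    case False
    have "S1 = {2..n-1} - S2"
    proof (rule set_eqI)
      fix x show "x \<in> S1 \<longleftrightarrow> x \<in> {2..n-1} - S2"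
      proof (cases "2 \<le> x \<and> x \<le> n - 1")
        case True then show ?thesis using gi[of x] \<open>\<not> g 2\<close> unfolding g_def by auto
      next
        case False then show ?thesis using S1 S2 by auto
      qed
    qed
    then show ?thesis using Tset_compl[OF S2] by simp
  qed
qed

lemma Tset_local:
  assumes ab: "a < b" and loc: "\<And>x. a \<le> x \<Longrightarrow> x \<le> b \<Longrightarrow> x \<in> S \<longleftrightarrow> x \<in> S'"
  shows "{a,b} \<in> Tset n S \<longleftrightarrow> {a,b} \<in> Tset n S'"
proof -
  have "Aof n S \<inter> {a..b} = Aof n S' \<inter> {a..b}" using loc by (auto simp: Aof_def)
  moreover have "Bof n S \<inter> {a..b} = Bof n S' \<inter> {a..b}" using loc by (auto simp: Bof_def)
  ultimately show ?thesis using mem_Tset[OF ab] cnp_local by metis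
qed

lemma cross_H:
  assumes S: "S \<subseteq> {2..n-1}" and c: "2 \<le> c" "c + 2 \<le> n" "c \<in> S" "Suc c \<notin> S"
    and ab: "a \<le> c" "c < b"
  shows "a = c \<and> Suc c < b \<Longrightarrow> {a,b} \<in> Tset n S \<longleftrightarrow> cnp (Aof n S) a b"
    and "a < c \<and> b = Suc c \<Longrightarrow> {a,b} \<in> Tset n S \<longleftrightarrow> cnp (Bof n S) a b"
    and "\<not> (a = c \<and> Suc c < b) \<Longrightarrow> \<not> (a < c \<and> b = Suc c) \<Longrightarrow> {a,b} \<notin> Tset n S"
proof -
  have ab': "a < b" using ab by simp
  have cA: "c \<in> Aof n S" using c by (simp add: Aof_def)
  have cB: "c \<notin> Bof n S" using c by (simp add: Bof_def)
  have sA: "Suc c \<notin> Aof n S" using c by (simp add: Aof_def)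
  have sB: "Suc c \<in> Bof n S" using c by (simp add: Bof_def)
  show "a = c \<and> Suc c < b \<Longrightarrow> {a,b} \<in> Tset n S \<longleftrightarrow> cnp (Aof n S) a b"
  proof -
    assume h: "a = c \<and> Suc c < b"
    have "\<not> cnp (Bof n S) a b" using h sB unfolding cnp_def by auto
    then show ?thesis using mem_Tset[OF ab'] by blast
  qed
  show "a < c \<and> b = Suc c \<Longrightarrow> {a,b} \<in> Tset n S \<longleftrightarrow> cnp (Bof n S) a b"
  proof -
    assume h: "a < c \<and> b = Suc c"
    have "\<not> cnp (Aof n S) a b" using h cA unfolding cnp_def by auto
    then show ?thesis using mem_Tset[OF ab'] by blast
  qed
  show "\<not> (a = c \<and> Suc c < b) \<Longrightarrow> \<not> (a < c \<and> b = Suc c) \<Longrightarrow> {a,b} \<notin> Tset n S"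
  proof -
    assume h1: "\<not> (a = c \<and> Suc c < b)" and h2: "\<not> (a < c \<and> b = Suc c)"
    have "(a = c \<and> b = Suc c) \<or> (a < c \<and> Suc c < b)" using h1 h2 ab by auto
    then have "\<not> cnp (Aof n S) a b \<and> \<not> cnp (Bof n S) a b"
    proof
      assume "a = c \<and> b = Suc c" then show ?thesis using sA cB unfolding cnp_def by auto
    next
      assume h: "a < c \<and> Suc c < b"
      have "\<not> cnp (Aof n S) a b" unfolding cnp_def using cA h by auto
      moreover have "a < Suc c" "Suc c < b" using h by auto
      then have "\<not> cnp (Bof n S) a b" unfolding cnp_def using sB by blast
      ultimately show ?thesis by blast
    qed
    then show ?thesis using mem_Tset[OF ab'] by blast
  qed
qed

lemma splice_mem:
  assumes S1: "S1 \<subseteq> {2..n-1}" and S2: "S2 \<subseteq> {2..n-1}" and c: "2 \<le> c" "c + 2 \<le> n"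
    and c1: "c \<in> S1" "Suc c \<notin> S1" and c2: "c \<in> S2" "Suc c \<notin> S2"
    and Sz: "Sz = {i\<in>S1. i \<le> c} \<union> {i\<in>S2. c < i}" and Sw: "Sw = {i\<in>S2. i \<le> c} \<union> {i\<in>S1. c < i}"
    and ab: "a < b"
  shows "(({a,b}\<in>Tset n Sz \<longleftrightarrow> {a,b}\<in>Tset n S1) \<and> ({a,b}\<in>Tset n Sw \<longleftrightarrow> {a,b}\<in>Tset n S2)) \<or>
         (({a,b}\<in>Tset n Sz \<longleftrightarrow> {a,b}\<in>Tset n S2) \<and> ({a,b}\<in>Tset n Sw \<longleftrightarrow> {a,b}\<in>Tset n S1))"
proof -
  have Szs: "Sz \<subseteq> {2..n-1}" "c \<in> Sz" "Suc c \<notin> Sz" using S1 S2 c1 c2 Sz by auto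
  have Sws: "Sw \<subseteq> {2..n-1}" "c \<in> Sw" "Suc c \<notin> Sw" using S1 S2 c1 c2 Sw by auto
  consider "b \<le> c" | "c < a" | "a \<le> c" "c < b" by linarith
  then show ?thesis
  proof cases
    case 1
    have "{a,b}\<in>Tset n Sz \<longleftrightarrow> {a,b}\<in>Tset n S1" using 1 Sz by (intro Tset_local[OF ab]) auto
    moreover have "{a,b}\<in>Tset n Sw \<longleftrightarrow> {a,b}\<in>Tset n S2" using 1 Sw by (intro Tset_local[OF ab]) auto
    ultimately show ?thesis by blast
  next
    case 2
    have "{a,b}\<in>Tset n Sz \<longleftrightarrow> {a,b}\<in>Tset n S2" using 2 Sz by (intro Tset_local[OF ab]) auto
    moreover have "{a,b}\<in>Tset n Sw \<longleftrightarrow> {a,b}\<in>Tset n S1" using 2 Sw by (intro Tset_local[OF ab]) auto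
    ultimately show ?thesis by blast
  next
    case 3
    note H1 = cross_H[OF S1 c c1 3] and H2 = cross_H[OF S2 c c2 3]
      and Hz = cross_H[OF Szs(1) c Szs(2,3) 3] and Hw = cross_H[OF Sws(1) c Sws(2,3) 3]
    consider "a = c \<and> Suc c < b" | "a < c \<and> b = Suc c" | "\<not> (a = c \<and> Suc c < b)" "\<not> (a < c \<and> b = Suc c)"
      by blast
    then show ?thesis
    proof cases
      case 1
      have "Aof n Sz \<inter> {a..b} = Aof n S2 \<inter> {a..b}" using 1 Sz c1 c2 by (auto simp: Aof_def)
      then have z: "cnp (Aof n Sz) a b = cnp (Aof n S2) a b" by (rule cnp_local)
      have "Aof n Sw \<inter> {a..b} = Aof n S1 \<inter> {a..b}" using 1 Sw c1 c2 by (auto simp: Aof_def)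
      then have w: "cnp (Aof n Sw) a b = cnp (Aof n S1) a b" by (rule cnp_local)
      show ?thesis using H1(1)[OF 1] H2(1)[OF 1] Hz(1)[OF 1] Hw(1)[OF 1] z w by blast
    next
      case 2
      have eqz: "x \<in> Sz \<longleftrightarrow> x \<in> S1" and eqw: "x \<in> Sw \<longleftrightarrow> x \<in> S2" if "x \<le> Suc c" for x
      proof -
        show "x \<in> Sz \<longleftrightarrow> x \<in> S1"
        proof (cases "x \<le> c")
          case True then show ?thesis by (simp add: Sz)
        next
          case False then have "x = Suc c" using that by simp
          then show ?thesis using c1 c2 by (simp add: Sz)
        qed
        show "x \<in> Sw \<longleftrightarrow> x \<in> S2"
        proof (cases "x \<le> c")
          case True then show ?thesis by (simp add: Sw)
        next
          case False then have "x = Suc c" using that by simp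
          then show ?thesis using c1 c2 by (simp add: Sw)
        qed
      qed
      have "Bof n Sz \<inter> {a..b} = Bof n S1 \<inter> {a..b}" using 2 eqz by (auto simp: Bof_def)
      then have z: "cnp (Bof n Sz) a b = cnp (Bof n S1) a b" by (rule cnp_local)
      have "Bof n Sw \<inter> {a..b} = Bof n S2 \<inter> {a..b}" using 2 eqw by (auto simp: Bof_def)
      then have w: "cnp (Bof n Sw) a b = cnp (Bof n S2) a b" by (rule cnp_local)
      show ?thesis using H1(2)[OF 2] H2(2)[OF 2] Hz(2)[OF 2] Hw(2)[OF 2] z w by blast
    next
      case 3
      show ?thesis using H1(3)[OF 3] H2(3)[OF 3] Hz(3)[OF 3] Hw(3)[OF 3] by blast
    qed
  qed
qed


definition Lft :: "nat set \<Rightarrow> nat \<Rightarrow> nat set" where "Lft X c = {x\<in>X. x < c}"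
definition Rgt :: "nat set \<Rightarrow> nat \<Rightarrow> nat set" where "Rgt X c = {x\<in>X. c < x}"

lemma decomp: "c \<in> X \<Longrightarrow> X = Lft X c \<union> {c} \<union> Rgt X c"
  by (auto simp: Lft_def Rgt_def)

lemma count_fam:
  assumes sub: "BB \<subseteq> Pow {2..n}"
    and P: "\<And>X Y c. X \<in> BB \<Longrightarrow> Y \<in> BB \<Longrightarrow> c \<in> X \<Longrightarrow> c \<in> Y \<Longrightarrow> Lft X c = Lft Y c \<or> Rgt X c = Rgt Y c"
  shows "card BB \<le> (n+1)^2"
proof -
  define pre where "pre c \<longleftrightarrow> (\<forall>X\<in>BB. \<forall>Y\<in>BB. c\<in>X \<longrightarrow> c\<in>Y \<longrightarrow> Lft X c = Lft Y c)" for c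
  have grid: "Rgt X c = Rgt Y c" if np: "\<not> pre c" and XY: "X \<in> BB" "Y \<in> BB" "c \<in> X" "c \<in> Y" for X Y c
  proof -
    obtain X0 Y0 where X0: "X0 \<in> BB" "Y0 \<in> BB" "c \<in> X0" "c \<in> Y0" "Lft X0 c \<noteq> Lft Y0 c"
      using np unfolding pre_def by blast
    have R0: "Rgt X0 c = Rgt Y0 c" using P[OF X0(1-4)] X0(5) by blast
    have all: "Rgt Z c = Rgt X0 c" if "Z \<in> BB" "c \<in> Z" for Z
    proof -
      have "Lft Z c = Lft X0 c \<or> Rgt Z c = Rgt X0 c" using P[OF that(1) X0(1) that(2) X0(3)] .
      moreover have "Lft Z c = Lft Y0 c \<or> Rgt Z c = Rgt Y0 c" using P[OF that(1) X0(2) that(2) X0(4)] .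
      ultimately show ?thesis using R0 X0(5) by auto
    qed
    show ?thesis using all[OF XY(1,3)] all[OF XY(2,4)] by simp
  qed
  have finX: "finite X" if "X \<in> BB" for X
  proof -
    have "X \<subseteq> {2..n}" using that sub by blast
    then show ?thesis by (rule finite_subset) simp
  qed
  have ge2: "2 \<le> x \<and> x \<le> n" if "X \<in> BB" "x \<in> X" for X x
  proof -
    have "X \<subseteq> {2..n}" using that(1) sub by blast
    then have "x \<in> {2..n}" using that(2) by blast
    then show ?thesis by simp
  qed
  define J where "J X = {v\<in>X. pre v}" for X
  define code where "code X = (if X = {} then (0::nat, 0::nat) else if J X = {} then (Min X, 1)
      else (if Rgt X (Max (J X)) = {} then (Max (J X), 0) else (Max (J X), Min (Rgt X (Max (J X))))))" for X
  have Jfin: "finite (J X)" if "X \<in> BB" for X using finX[OF that] unfolding J_def by simp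
  have c_empty: "code X = (0,0)" if "X = {}" for X using that unfolding code_def by simp
  have c2: "code X = (Min X, 1) \<and> Min X \<in> X \<and> \<not> pre (Min X) \<and> Lft X (Min X) = {}"
    if "X \<in> BB" "X \<noteq> {}" "J X = {}" for X
  proof -
    have m: "Min X \<in> X" using finX[OF that(1)] that(2) by simp
    have "\<not> pre (Min X)" using m that(3) unfolding J_def by auto
    moreover have "Lft X (Min X) = {}" unfolding Lft_def using finX[OF that(1)] by (auto dest: Min_le[rotated] simp: not_less[symmetric])
    ultimately show ?thesis using m that unfolding code_def by simp
  qed
  have c3: "code X = (Max (J X), 0) \<and> Max (J X) \<in> X \<and> pre (Max (J X)) \<and> Rgt X (Max (J X)) = {}"
    if "X \<in> BB" "J X \<noteq> {}" "Rgt X (Max (J X)) = {}" for X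
  proof -
    have "Max (J X) \<in> J X" using Jfin[OF that(1)] that(2) by simp
    then have "Max (J X) \<in> X" "pre (Max (J X))" unfolding J_def by auto
    moreover have "X \<noteq> {}" using that(2) unfolding J_def by auto
    ultimately show ?thesis using that unfolding code_def by simp
  qed
  have c4: "code X = (Max (J X), Min (Rgt X (Max (J X)))) \<and> Max (J X) \<in> X \<and> pre (Max (J X))
      \<and> Min (Rgt X (Max (J X))) \<in> X \<and> Max (J X) < Min (Rgt X (Max (J X)))
      \<and> \<not> pre (Min (Rgt X (Max (J X))))
      \<and> X = Lft X (Max (J X)) \<union> {Max (J X)} \<union> {Min (Rgt X (Max (J X)))} \<union> Rgt X (Min (Rgt X (Max (J X))))"
    if "X \<in> BB" "J X \<noteq> {}" "Rgt X (Max (J X)) \<noteq> {}" for X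
  proof -
    define j where "j = Max (J X)"
    define k where "k = Min (Rgt X j)"
    have "j \<in> J X" using Jfin[OF that(1)] that(2) unfolding j_def by simp
    then have j: "j \<in> X" "pre j" unfolding J_def by auto
    have fR: "finite (Rgt X j)" using finX[OF that(1)] unfolding Rgt_def by simp
    have "k \<in> Rgt X j" using fR that(3) unfolding k_def j_def by simp
    then have k: "k \<in> X" "j < k" unfolding Rgt_def by auto
    have kmin: "\<And>x. x \<in> X \<Longrightarrow> j < x \<Longrightarrow> k \<le> x" using fR unfolding k_def Rgt_def by simp
    have "\<not> pre k"
    proof
      assume "pre k"
      then have "k \<in> J X" using k unfolding J_def by simp
      then have "k \<le> j" using Jfin[OF that(1)] unfolding j_def by simp
      then show False using k by simp
    qed
    moreover have "X = Lft X j \<union> {j} \<union> {k} \<union> Rgt X k"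
    proof (rule set_eqI)
      fix x show "x \<in> X \<longleftrightarrow> x \<in> Lft X j \<union> {j} \<union> {k} \<union> Rgt X k"
      proof
        assume x: "x \<in> X"
        consider "x < j" | "x = j" | "j < x" "x < k" | "x = k" | "k < x" by linarith
        then show "x \<in> Lft X j \<union> {j} \<union> {k} \<union> Rgt X k"
        proof cases
          case 3 then show ?thesis using kmin[OF x] by simp
        qed (use x in \<open>auto simp: Lft_def Rgt_def\<close>)
      next
        assume "x \<in> Lft X j \<union> {j} \<union> {k} \<union> Rgt X k"
        then show "x \<in> X" using j k by (auto simp: Lft_def Rgt_def)
      qed
    qed
    moreover have "X \<noteq> {}" using j by auto
    ultimately show ?thesis using that j k unfolding code_def j_def[symmetric] k_def[symmetric] by simp
  qed
  have inj: "inj_on code BB"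
  proof (rule inj_onI)
    fix X Y assume X: "X \<in> BB" and Y: "Y \<in> BB" and eq: "code X = code Y"
    show "X = Y"
    proof (cases "X = {}")
      case True
      show ?thesis
      proof (rule ccontr)
        assume "X \<noteq> Y" then have Yne: "Y \<noteq> {}" using True by simp
        have "code Y \<noteq> (0,0)"
        proof (cases "J Y = {}")
          case True then show ?thesis using c2[OF Y Yne True] ge2[OF Y] by fastforce
        next
          case False
          show ?thesis
          proof (cases "Rgt Y (Max (J Y)) = {}")
            case True then show ?thesis using c3[OF Y False True] ge2[OF Y] by fastforce
          next
            case F2: False then show ?thesis using c4[OF Y False F2] ge2[OF Y] by fastforce
          qed
        qed
        then show False using eq c_empty[OF True] by simp
      qed
    next
      case Xne: False
      have Yne: "Y \<noteq> {}"
      proof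
        assume Ye: "Y = {}"
        have "code X \<noteq> (0,0)"
        proof (cases "J X = {}")
          case True then show ?thesis using c2[OF X Xne True] ge2[OF X] by fastforce
        next
          case False
          show ?thesis
          proof (cases "Rgt X (Max (J X)) = {}")
            case True then show ?thesis using c3[OF X False True] ge2[OF X] by fastforce
          next
            case F2: False then show ?thesis using c4[OF X False F2] ge2[OF X] by fastforce
          qed
        qed
        then show False using eq c_empty[OF Ye] by simp
      qed
      have snd_cases: "(J Z = {} \<and> snd (code Z) = 1) \<or> (J Z \<noteq> {} \<and> Rgt Z (Max (J Z)) = {} \<and> snd (code Z) = 0)
          \<or> (J Z \<noteq> {} \<and> Rgt Z (Max (J Z)) \<noteq> {} \<and> 3 \<le> snd (code Z))" if "Z \<in> BB" "Z \<noteq> {}" for Z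
      proof (cases "J Z = {}")
        case True then show ?thesis using c2[OF that True] by simp
      next
        case False
        show ?thesis
        proof (cases "Rgt Z (Max (J Z)) = {}")
          case True then show ?thesis using c3[OF that(1) False True] False by simp
        next
          case F2: False
          have "2 \<le> Max (J Z)" using c4[OF that(1) False F2] ge2[OF that(1)] by blast
          then show ?thesis using c4[OF that(1) False F2] False F2 by simp
        qed
      qed
      have sX: "snd (code X) = snd (code Y)" "fst (code X) = fst (code Y)" using eq by simp_all
      consider (A) "J X = {}" "J Y = {}" | (B) "J X \<noteq> {}" "J Y \<noteq> {}" "Rgt X (Max (J X)) = {}" "Rgt Y (Max (J Y)) = {}"
        | (C) "J X \<noteq> {}" "J Y \<noteq> {}" "Rgt X (Max (J X)) \<noteq> {}" "Rgt Y (Max (J Y)) \<noteq> {}"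
        using snd_cases[OF X Xne] snd_cases[OF Y Yne] sX(1) by force
      then show ?thesis
      proof cases
        case A
        note cx = c2[OF X Xne A(1)] and cy = c2[OF Y Yne A(2)]
        have m: "Min X = Min Y" using cx cy sX(2) by simp
        have "Rgt X (Min X) = Rgt Y (Min X)" using grid[OF _ X Y] cx cy m by simp
        then show ?thesis using decomp[of "Min X" X] decomp[of "Min Y" Y] cx cy m by simp
      next
        case B
        note cx = c3[OF X B(1) B(3)] and cy = c3[OF Y B(2) B(4)]
        have m: "Max (J X) = Max (J Y)" using cx cy sX(2) by simp
        have "Lft X (Max (J X)) = Lft Y (Max (J X))" using cx cy m X Y unfolding pre_def by metis
        then show ?thesis using decomp[of "Max (J X)" X] decomp[of "Max (J Y)" Y] cx cy m by simp
      next
        case C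
        note cx = c4[OF X C(1) C(3)] and cy = c4[OF Y C(2) C(4)]
        have m: "Max (J X) = Max (J Y)" using cx cy sX(2) by simp
        have k: "Min (Rgt X (Max (J X))) = Min (Rgt Y (Max (J Y)))" using cx cy sX(1) by simp
        have l: "Lft X (Max (J X)) = Lft Y (Max (J X))" using cx cy m X Y unfolding pre_def by metis
        have r: "Rgt X (Min (Rgt X (Max (J X)))) = Rgt Y (Min (Rgt X (Max (J X))))"
          using grid[OF _ X Y] cx cy k by simp
        show ?thesis using cx cy m k l r by metis
      qed
    qed
  qed
  have img: "code ` BB \<subseteq> {0..n} \<times> {0..n}"
  proof
    fix z assume "z \<in> code ` BB"
    then obtain X where X: "X \<in> BB" and z: "z = code X" by blast
    show "z \<in> {0..n} \<times> {0..n}"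
    proof (cases "X = {}")
      case True then show ?thesis using z c_empty by simp
    next
      case Xne: False
      show ?thesis
      proof (cases "J X = {}")
        case True then show ?thesis using c2[OF X Xne True] ge2[OF X, of "Min X"] z by auto
      next
        case False
        show ?thesis
        proof (cases "Rgt X (Max (J X)) = {}")
          case True then show ?thesis using c3[OF X False True] ge2[OF X, of "Max (J X)"] z by auto
        next
          case F2: False then show ?thesis
            using c4[OF X False F2] ge2[OF X, of "Max (J X)"] ge2[OF X, of "Min (Rgt X (Max (J X)))"] z by auto
        qed
      qed
    qed
  qed
  have "card BB = card (code ` BB)" using card_image[OF inj] by simp
  also have "\<dots> \<le> card ({0..n} \<times> {0..n})" by (rule card_mono[OF _ img]) simp
  also have "\<dots> = (n+1)^2" by (simp add: power2_eq_square)
  finally show ?thesis .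
qed


lemma splice_sum:
  assumes S1: "S1 \<subseteq> {2..n-1}" and S2: "S2 \<subseteq> {2..n-1}" and c: "2 \<le> c" "c + 2 \<le> n"
    and c1: "c \<in> S1" "Suc c \<notin> S1" and c2: "c \<in> S2" "Suc c \<notin> S2"
    and Sz: "Sz = {i\<in>S1. i \<le> c} \<union> {i\<in>S2. c < i}" and Sw: "Sw = {i\<in>S2. i \<le> c} \<union> {i\<in>S1. c < i}"
  shows "char_vec (Tset n S1) + char_vec (Tset n S2) = char_vec (Tset n Sz) + char_vec (Tset n Sw)"
proof (rule poly_mapping_eqI)
  fix e
  have n1: "1 \<le> n" using c by simp
  have Szs: "Sz \<subseteq> {2..n-1}" and Sws: "Sw \<subseteq> {2..n-1}" using S1 S2 Sz Sw by auto
  note f1 = Tset_finite[OF S1 n1] and f2 = Tset_finite[OF S2 n1]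
    and fz = Tset_finite[OF Szs n1] and fw = Tset_finite[OF Sws n1]
  show "Poly_Mapping.lookup (char_vec (Tset n S1) + char_vec (Tset n S2)) e =
        Poly_Mapping.lookup (char_vec (Tset n Sz) + char_vec (Tset n Sw)) e"
  proof (cases "\<exists>a b. a < b \<and> e = {a,b}")
    case True
    then obtain a b where ab: "a < b" "e = {a,b}" by blast
    from splice_mem[OF S1 S2 c c1 c2 Sz Sw ab(1)]
    show ?thesis using f1 f2 fz fw ab(2) by (auto simp: lookup_add lookup_char_vec)
  next
    case False
    then have "e \<notin> Tset n S1" "e \<notin> Tset n S2" "e \<notin> Tset n Sz" "e \<notin> Tset n Sw"
      using Tset_cases by blast+
    then show ?thesis using f1 f2 fz fw by (simp add: lookup_add lookup_char_vec)
  qed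
qed

lemma Bd_splice:
  assumes S1: "S1 \<subseteq> {2..n-1}" and S2: "S2 \<subseteq> {2..n-1}"
    and Sz: "Sz = {i\<in>S1. i \<le> c} \<union> {i\<in>S2. c < i}"
  shows "Lft (Bd n (Tset n Sz)) c = Lft (Bd n (Tset n S1)) c"
    and "Rgt (Bd n (Tset n Sz)) c = Rgt (Bd n (Tset n S2)) c"
proof -
  have Szs: "Sz \<subseteq> {2..n-1}" using S1 S2 Sz by auto
  show "Lft (Bd n (Tset n Sz)) c = Lft (Bd n (Tset n S1)) c"
  proof (rule set_eqI)
    fix i
    show "i \<in> Lft (Bd n (Tset n Sz)) c \<longleftrightarrow> i \<in> Lft (Bd n (Tset n S1)) c"
    proof (cases "i < c")
      case True
      then have "i \<in> Sz \<longleftrightarrow> i \<in> S1" "Suc i \<in> Sz \<longleftrightarrow> Suc i \<in> S1" using Sz by auto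
      then show ?thesis unfolding Lft_def using Bd_Tset[OF Szs, of i] Bd_Tset[OF S1, of i] by simp
    qed (simp add: Lft_def)
  qed
  show "Rgt (Bd n (Tset n Sz)) c = Rgt (Bd n (Tset n S2)) c"
  proof (rule set_eqI)
    fix i
    show "i \<in> Rgt (Bd n (Tset n Sz)) c \<longleftrightarrow> i \<in> Rgt (Bd n (Tset n S2)) c"
    proof (cases "c < i")
      case True
      then have "i \<in> Sz \<longleftrightarrow> i \<in> S2" "Suc i \<in> Sz \<longleftrightarrow> Suc i \<in> S2" using Sz by auto
      then show ?thesis unfolding Rgt_def using Bd_Tset[OF Szs, of i] Bd_Tset[OF S2, of i] by simp
    qed (simp add: Rgt_def)
  qed
qed

lemma PT_sub: "1 \<le> n \<Longrightarrow> PT n \<subseteq> Pow (Pow {1..n})"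
  using PT_Tset Tset_subset by blast

lemma PT_finite: "1 \<le> n \<Longrightarrow> finite (PT n)"
  using PT_sub by (meson finite_Pow_iff finite_atLeastAtMost rev_finite_subset)

lemma PT_fin_elem: "1 \<le> n \<Longrightarrow> T \<in> PT n \<Longrightarrow> finite T"
  using PT_Tset Tset_finite by blast

lemma skel_sub: "skel_vertices n \<subseteq> char_vec ` PT n"
  unfolding skel_vertices_def PYR_def using extreme_point_of_convex_hull by blast

lemma normalize:
  assumes S: "S \<subseteq> {2..n-1}" and c: "c \<in> Bd n (Tset n S)"
  shows "\<exists>S'. S' \<subseteq> {2..n-1} \<and> Tset n S' = Tset n S \<and> c \<in> S' \<and> Suc c \<notin> S'"
proof -
  have cc: "2 \<le> c" "c + 2 \<le> n" "\<not> (c \<in> S \<longleftrightarrow> Suc c \<in> S)" using c Bd_Tset[OF S] by auto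
  show ?thesis
  proof (cases "c \<in> S")
    case True then show ?thesis using S cc by blast
  next
    case False
    define S' where "S' = {2..n-1} - S"
    have "c \<in> S'" "Suc c \<notin> S'" using False cc unfolding S'_def by auto
    moreover have "Tset n S' = Tset n S" unfolding S'_def by (rule Tset_compl[OF S])
    moreover have "S' \<subseteq> {2..n-1}" unfolding S'_def by blast
    ultimately show ?thesis by blast
  qed
qed

lemma clique_upper:
  assumes n: "5 \<le> n" and C: "C \<subseteq> skel_vertices n"
    and adj: "\<forall>x\<in>C. \<forall>y\<in>C. x \<noteq> y \<longrightarrow> skel_adjacent n x y"
  shows "card C \<le> (n+1)^2"
proof -
  have n1: "1 \<le> n" using n by simp
  define C' where "C' = {T \<in> PT n. char_vec T \<in> C}"
  have fC': "finite C'" using PT_finite[OF n1] unfolding C'_def by simp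
  have CC': "C \<subseteq> char_vec ` C'" using C skel_sub unfolding C'_def by blast
  have "card C \<le> card (char_vec ` C')" by (rule card_mono[OF _ CC']) (simp add: fC')
  also have "\<dots> \<le> card C'" by (rule card_image_le[OF fC'])
  finally have c1: "card C \<le> card C'" .
  have inj: "inj_on (Bd n) C'"
  proof (rule inj_onI)
    fix T1 T2 assume T: "T1 \<in> C'" "T2 \<in> C'" and B: "Bd n T1 = Bd n T2"
    have "T1 \<in> PT n" "T2 \<in> PT n" using T unfolding C'_def by auto
    then obtain S1 S2 where S: "S1 \<subseteq> {2..n-1}" "S2 \<subseteq> {2..n-1}" and e: "T1 = Tset n S1" "T2 = Tset n S2"
      using PT_Tset by meson
    show "T1 = T2" using Bd_inj[OF S] B e by simp
  qed
  have c2: "card C' = card (Bd n ` C')" using card_image[OF inj] by simp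
  have sub: "Bd n ` C' \<subseteq> Pow {2..n}" unfolding Bd_def by auto
  have P: "Lft X c = Lft Y c \<or> Rgt X c = Rgt Y c"
    if XY: "X \<in> Bd n ` C'" "Y \<in> Bd n ` C'" "c \<in> X" "c \<in> Y" for X Y c
  proof (rule ccontr)
    assume neq: "\<not> (Lft X c = Lft Y c \<or> Rgt X c = Rgt Y c)"
    obtain T1 T2 where T: "T1 \<in> C'" "T2 \<in> C'" "X = Bd n T1" "Y = Bd n T2" using XY(1,2) by blast
    have TP: "T1 \<in> PT n" "T2 \<in> PT n" "char_vec T1 \<in> C" "char_vec T2 \<in> C" using T unfolding C'_def by auto
    obtain S1 S2 where S: "S1 \<subseteq> {2..n-1}" "S2 \<subseteq> {2..n-1}" "T1 = Tset n S1" "T2 = Tset n S2"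
      using PT_Tset TP(1,2) by meson
    have cb1: "c \<in> Bd n (Tset n S1)" using XY(3) T(3) S(3) by simp
    have cb2: "c \<in> Bd n (Tset n S2)" using XY(4) T(4) S(4) by simp
    obtain S1' where S1': "S1' \<subseteq> {2..n-1}" "Tset n S1' = Tset n S1" "c \<in> S1'" "Suc c \<notin> S1'"
      using normalize[OF S(1) cb1] by blast
    obtain S2' where S2': "S2' \<subseteq> {2..n-1}" "Tset n S2' = Tset n S2" "c \<in> S2'" "Suc c \<notin> S2'"
      using normalize[OF S(2) cb2] by blast
    have cc: "2 \<le> c" "c + 2 \<le> n" using XY(3) T(3) unfolding Bd_def by auto
    have T1eq: "T1 = Tset n S1'" and T2eq: "T2 = Tset n S2'" using S S1' S2' by simp_all
    have "T1 \<noteq> T2" using neq T by auto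
    then have cne: "char_vec T1 \<noteq> char_vec T2"
      using char_vec_inj PT_fin_elem[OF n1] TP(1,2) by blast
    then have face: "closed_segment (char_vec T1) (char_vec T2) face_of PYR n"
      using adj TP(3,4) unfolding skel_adjacent_def by blast
    define Sz where "Sz = {i\<in>S1'. i \<le> c} \<union> {i\<in>S2'. c < i}"
    define Sw where "Sw = {i\<in>S2'. i \<le> c} \<union> {i\<in>S1'. c < i}"
    have Szs: "Sz \<subseteq> {2..n-1}" and Sws: "Sw \<subseteq> {2..n-1}" using S1' S2' unfolding Sz_def Sw_def by auto
    have sum: "char_vec T1 + char_vec T2 = char_vec (Tset n Sz) + char_vec (Tset n Sw)"
      unfolding T1eq T2eq by (rule splice_sum[OF S1'(1) S2'(1) cc S1'(3,4) S2'(3,4) Sz_def Sw_def])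
    have Bz: "Lft (Bd n (Tset n Sz)) c = Lft (Bd n T1) c" "Rgt (Bd n (Tset n Sz)) c = Rgt (Bd n T2) c"
      using Bd_splice[OF S1'(1) S2'(1) Sz_def] T1eq T2eq by simp_all
    have z1: "Tset n Sz \<noteq> T1" using Bz neq T by auto
    have z2: "Tset n Sz \<noteq> T2" using Bz neq T by auto
    have zP: "Tset n Sz \<in> PT n" and wP: "Tset n Sw \<in> PT n" using Tset_PT Szs Sws n by auto
    have fz: "finite (Tset n Sz)" using PT_fin_elem[OF n1 zP] .
    have "char_vec (Tset n Sz) \<noteq> char_vec T1" "char_vec (Tset n Sz) \<noteq> char_vec T2"
      using z1 z2 char_vec_inj fz PT_fin_elem[OF n1] TP(1,2) by blast+
    then have "\<not> closed_segment (char_vec T1) (char_vec T2) face_of convex hull (char_vec ` PT n)"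
      using nonadj[of "char_vec T1" "char_vec ` PT n" "char_vec T2" "char_vec (Tset n Sz)" "char_vec (Tset n Sw)"]
        TP(1,2) zP wP sum zo_char_vec fz PT_fin_elem[OF n1] by blast
    then show False using face unfolding PYR_def by simp
  qed
  have "card (Bd n ` C') \<le> (n+1)^2" by (rule count_fam[OF sub P]) blast+
  then show ?thesis using c1 c2 by simp
qed


lemma face_union:
  assumes n1: "1 \<le> n" and Ts: "Ts \<subseteq> PT n" and uq: "\<And>T. T \<in> PT n \<Longrightarrow> T \<subseteq> \<Union>Ts \<Longrightarrow> T \<in> Ts"
  shows "convex hull (char_vec ` Ts) face_of PYR n"
proof -
  define E where "E = Pow {1..n} - \<Union>Ts"
  define f where "f v = - (\<Sum>e\<in>E. Poly_Mapping.lookup v e)" for v :: vec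
  have finE: "finite E" unfolding E_def by simp
  have lin: "f (u *\<^sub>R a + v *\<^sub>R b) = u * f a + v * f b" for u v a b
    unfolding f_def by (simp add: lookup_add lookup_scaleR_pm sum.distrib sum_distrib_left algebra_simps)
  have val: "f (char_vec T) = - real (card (E \<inter> T))" if "T \<in> PT n" for T
  proof -
    have fT: "finite T" using PT_fin_elem[OF n1 that] .
    have "(\<Sum>e\<in>E. Poly_Mapping.lookup (char_vec T) e) = (\<Sum>e\<in>E. if e \<in> T then 1 else 0)"
      using fT by (simp add: lookup_char_vec)
    also have "\<dots> = (\<Sum>e\<in>E \<inter> T. 1)" using sum.inter_restrict[OF finE, of "\<lambda>_. 1::real" T] by simp
    also have "\<dots> = real (card (E \<inter> T))" by simp
    finally show ?thesis unfolding f_def by simp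
  qed
  have top: "f x = 0" if xT: "x \<in> char_vec ` Ts" for x
  proof -
    obtain T where T: "T \<in> Ts" "x = char_vec T" using xT by blast
    have "E \<inter> T = {}" using T(1) unfolding E_def by blast
    then show ?thesis using val[of T] T Ts by auto
  qed
  have rest: "f x \<le> 0 - 1" if xT: "x \<in> char_vec ` PT n" "x \<notin> char_vec ` Ts" for x
  proof -
    obtain T where T: "T \<in> PT n" "x = char_vec T" using xT(1) by blast
    have "T \<notin> Ts" using T xT(2) by blast
    then have "\<not> T \<subseteq> \<Union>Ts" using uq T(1) by blast
    then obtain e where e: "e \<in> T" "e \<notin> \<Union>Ts" by blast
    have "e \<in> Pow {1..n}" using PT_sub[OF n1] T(1) e(1) by blast
    then have "e \<in> E \<inter> T" using e unfolding E_def by blast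
    then have "card (E \<inter> T) \<ge> 1" using finE by (metis One_nat_def card_0_eq finite_Int less_one not_le empty_iff)
    then show ?thesis using val[OF T(1)] T(2) by simp
  qed
  have "convex hull (char_vec ` Ts) face_of convex hull (char_vec ` PT n)"
    by (rule exposed_face[of f, OF lin]) (use Ts top rest in auto)
  then show ?thesis unfolding PYR_def .
qed

lemma uniq_PT:
  assumes p1: "2 \<le> p1" "p1 \<le> m" "m < q1" "q1 + 2 \<le> n"
    and p2: "2 \<le> p2" "p2 \<le> m" "m < q2" "q2 + 2 \<le> n"
    and T: "T \<in> PT n" and sub: "T \<subseteq> Tset n (Sp n p1 q1) \<union> Tset n (Sp n p2 q2)"
  shows "T = Tset n (Sp n p1 q1) \<or> T = Tset n (Sp n p2 q2)"
proof -
  obtain S where S: "S \<subseteq> {2..n-1}" "T = Tset n S" using PT_Tset[OF T] by blast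
  show ?thesis using uniq[OF p1 p2 S(1)] sub S(2) by simp
qed

definition Ipar :: "nat \<Rightarrow> nat \<Rightarrow> (nat \<times> nat) set" where
  "Ipar n m = {2..m} \<times> {Suc m..n-2}"

lemma Ipar_D: "(p,q) \<in> Ipar n m \<Longrightarrow> 2 \<le> p \<and> p \<le> m \<and> m < q \<and> q + 2 \<le> n"
  unfolding Ipar_def by auto

lemma Sp_PT: "(p,q) \<in> Ipar n m \<Longrightarrow> Tset n (Sp n p q) \<in> PT n"
  using Ipar_D[of p q n m] Sp_sub[of p q n] Tset_PT[of n "Sp n p q"] by auto

lemma vertex_Sp:
  assumes pq: "(p,q) \<in> Ipar n m"
  shows "char_vec (Tset n (Sp n p q)) \<in> skel_vertices n"
proof -
  note d = Ipar_D[OF pq]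
  have n1: "1 \<le> n" using d by simp
  have "convex hull (char_vec ` {Tset n (Sp n p q)}) face_of PYR n"
  proof (rule face_union[OF n1])
    show "{Tset n (Sp n p q)} \<subseteq> PT n" using Sp_PT[OF pq] by simp
    fix T assume "T \<in> PT n" "T \<subseteq> \<Union>{Tset n (Sp n p q)}"
    then show "T \<in> {Tset n (Sp n p q)}" using uniq_PT[of p m q n p q T] d by auto
  qed
  then have "{char_vec (Tset n (Sp n p q))} face_of PYR n" by simp
  then show ?thesis unfolding skel_vertices_def using face_of_singleton by blast
qed

lemma adj_Sp:
  assumes pq: "(p,q) \<in> Ipar n m" and pq': "(p',q') \<in> Ipar n m"
    and ne: "char_vec (Tset n (Sp n p q)) \<noteq> char_vec (Tset n (Sp n p' q'))"
  shows "skel_adjacent n (char_vec (Tset n (Sp n p q))) (char_vec (Tset n (Sp n p' q')))"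
proof -
  note d = Ipar_D[OF pq] and d' = Ipar_D[OF pq']
  have n1: "1 \<le> n" using d by simp
  have "convex hull (char_vec ` {Tset n (Sp n p q), Tset n (Sp n p' q')}) face_of PYR n"
  proof (rule face_union[OF n1])
    show "{Tset n (Sp n p q), Tset n (Sp n p' q')} \<subseteq> PT n" using Sp_PT[OF pq] Sp_PT[OF pq'] by simp
    fix T assume "T \<in> PT n" "T \<subseteq> \<Union>{Tset n (Sp n p q), Tset n (Sp n p' q')}"
    then show "T \<in> {Tset n (Sp n p q), Tset n (Sp n p' q')}" using uniq_PT[of p m q n p' q' T] d d' by auto
  qed
  then have "closed_segment (char_vec (Tset n (Sp n p q))) (char_vec (Tset n (Sp n p' q'))) face_of PYR n"
    by (simp add: segment_convex_hull)
  then show ?thesis unfolding skel_adjacent_def using vertex_Sp[OF pq] vertex_Sp[OF pq'] ne by blast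
qed

lemma skel_finite: "1 \<le> n \<Longrightarrow> finite (skel_vertices n)"
proof -
  assume n1: "1 \<le> n"
  have "finite (char_vec ` PT n)" using PT_finite[OF n1] by simp
  then show ?thesis by (rule finite_subset[OF skel_sub])
qed

lemma clique_set_finite: "1 \<le> n \<Longrightarrow> finite {card C | C. C \<subseteq> skel_vertices n \<and>
      (\<forall>x\<in>C. \<forall>y\<in>C. x \<noteq> y \<longrightarrow> skel_adjacent n x y)}"
proof -
  assume n1: "1 \<le> n"
  have "{card C | C. C \<subseteq> skel_vertices n \<and> (\<forall>x\<in>C. \<forall>y\<in>C. x \<noteq> y \<longrightarrow> skel_adjacent n x y)}
        \<subseteq> card ` Pow (skel_vertices n)"
  proof (rule subsetI)
    fix a assume "a \<in> {card C | C. C \<subseteq> skel_vertices n \<and> (\<forall>x\<in>C. \<forall>y\<in>C. x \<noteq> y \<longrightarrow> skel_adjacent n x y)}"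
    then have "\<exists>C. a = card C \<and> C \<subseteq> skel_vertices n \<and> (\<forall>x\<in>C. \<forall>y\<in>C. x \<noteq> y \<longrightarrow> skel_adjacent n x y)"
      by (rule CollectD)
    then obtain C where C: "a = card C" "C \<subseteq> skel_vertices n" by (elim exE conjE)
    show "a \<in> card ` Pow (skel_vertices n)" using C by (intro image_eqI[where x=C]) simp_all
  qed
  moreover have "finite (card ` Pow (skel_vertices n))" using skel_finite[OF n1] by simp
  ultimately show ?thesis by (rule finite_subset)
qed

lemma lower:
  assumes n1: "1 \<le> n" and m: "2 \<le> m"
  shows "card (Ipar n m) \<le> clique_number_PYR n"
proof -
  define g where "g z = char_vec (Tset n (Sp n (fst z) (snd z)))" for z
  have inj: "inj_on g (Ipar n m)"
  proof (rule inj_onI)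
    fix z z' assume z: "z \<in> Ipar n m" and z': "z' \<in> Ipar n m" and e: "g z = g z'"
    obtain p q where pq: "z = (p,q)" by (cases z)
    obtain p' q' where pq': "z' = (p',q')" by (cases z')
    note d = Ipar_D[of p q n m] and d' = Ipar_D[of p' q' n m]
    have "Tset n (Sp n p q) = Tset n (Sp n p' q')"
      using e char_vec_inj PT_fin_elem[OF n1] Sp_PT z z' pq pq' unfolding g_def by (metis fst_conv snd_conv)
    then show "z = z'" using Sp_inj[of p q n p' q'] d d' z z' pq pq' by auto
  qed
  define C where "C = g ` Ipar n m"
  have Cv: "C \<subseteq> skel_vertices n" unfolding C_def g_def using vertex_Sp by auto
  have Ca: "\<forall>x\<in>C. \<forall>y\<in>C. x \<noteq> y \<longrightarrow> skel_adjacent n x y" unfolding C_def g_def using adj_Sp by auto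
  have "card C \<in> {card C | C. C \<subseteq> skel_vertices n \<and> (\<forall>x\<in>C. \<forall>y\<in>C. x \<noteq> y \<longrightarrow> skel_adjacent n x y)}"
    using Cv Ca by (intro CollectI exI[of _ C]) simp
  then have "card C \<le> clique_number_PYR n" unfolding clique_number_PYR_def
    using clique_set_finite[OF n1] by (rule Max_ge[rotated])
  moreover have "card C = card (Ipar n m)" unfolding C_def using card_image[OF inj] .
  ultimately show ?thesis by simp
qed

lemma upper:
  assumes n: "5 \<le> n"
  shows "clique_number_PYR n \<le> (n+1)^2"
proof -
  have n1: "1 \<le> n" using n by simp
  have "0 \<in> {card C | C. C \<subseteq> skel_vertices n \<and> (\<forall>x\<in>C. \<forall>y\<in>C. x \<noteq> y \<longrightarrow> skel_adjacent n x y)}"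
    by (intro CollectI exI[of _ "{}"]) simp
  then have ne: "{card C | C. C \<subseteq> skel_vertices n \<and> (\<forall>x\<in>C. \<forall>y\<in>C. x \<noteq> y \<longrightarrow> skel_adjacent n x y)} \<noteq> {}"
    by (rule ex_in_conv[THEN iffD1, OF exI])
  show ?thesis unfolding clique_number_PYR_def
  proof (rule Max.boundedI)
    show "finite {card C | C. C \<subseteq> skel_vertices n \<and> (\<forall>x\<in>C. \<forall>y\<in>C. x \<noteq> y \<longrightarrow> skel_adjacent n x y)}"
      by (rule clique_set_finite[OF n1])
    show "{card C | C. C \<subseteq> skel_vertices n \<and> (\<forall>x\<in>C. \<forall>y\<in>C. x \<noteq> y \<longrightarrow> skel_adjacent n x y)} \<noteq> {}"
      by (rule ne)
    fix a assume "a \<in> {card C | C. C \<subseteq> skel_vertices n \<and> (\<forall>x\<in>C. \<forall>y\<in>C. x \<noteq> y \<longrightarrow> skel_adjacent n x y)}"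
    then have "\<exists>C. a = card C \<and> C \<subseteq> skel_vertices n \<and> (\<forall>x\<in>C. \<forall>y\<in>C. x \<noteq> y \<longrightarrow> skel_adjacent n x y)"
      by (rule CollectD)
    then obtain C where C: "a = card C" "C \<subseteq> skel_vertices n" "\<forall>x\<in>C. \<forall>y\<in>C. x \<noteq> y \<longrightarrow> skel_adjacent n x y"
      by (elim exE conjE)
    show "a \<le> (n+1)^2" using clique_upper[OF n C(2,3)] C(1) by simp
  qed
qed


theorem theorem6:
  shows "\<exists>c1 c2 :: real. c1 > 0 \<and> c2 > 0 \<and> (\<exists>N. \<forall>n\<ge>N.
           c1 * real n ^ 2 \<le> real (clique_number_PYR n) \<and>
           real (clique_number_PYR n) \<le> c2 * real n ^ 2)"
proof (rule exI[of _ "1/16"], rule exI[of _ 4], intro conjI)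
  show "(1/16::real) > 0" by simp
  show "(4::real) > 0" by simp
  show "\<exists>N. \<forall>n\<ge>N. 1/16 * real n ^ 2 \<le> real (clique_number_PYR n) \<and>
           real (clique_number_PYR n) \<le> 4 * real n ^ 2"
  proof (intro exI[of _ 10] allI impI conjI)
    fix n :: nat assume n: "10 \<le> n"
    define m where "m = n div 2"
    have nm: "n = 2*m \<or> n = 2*m+1" unfolding m_def by linarith
    have m5: "5 \<le> m" using n nm by linarith
    have cardI: "card (Ipar n m) = (m - 1) * (n - 2 - m)"
      unfolding Ipar_def by (simp add: card_cartesian_product)
    have a: "n \<le> 4*(m-1)" "n \<le> 4*(n-2-m)" using nm m5 by linarith+
    have "n*n \<le> (4*(m-1))*(4*(n-2-m))" by (rule mult_le_mono[OF a])
    then have "n^2 \<le> 16 * card (Ipar n m)" unfolding cardI by (simp add: power2_eq_square algebra_simps)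
    moreover have "card (Ipar n m) \<le> clique_number_PYR n" by (rule lower) (use n m5 in auto)
    ultimately have "n^2 \<le> 16 * clique_number_PYR n" by linarith
    then have "real (n^2) \<le> real (16 * clique_number_PYR n)" by (rule of_nat_mono)
    then show "1/16 * real n ^ 2 \<le> real (clique_number_PYR n)" by simp
    have "clique_number_PYR n \<le> (n+1)^2" by (rule upper) (use n in simp)
    also have "\<dots> \<le> (2*n)^2" by (rule power_mono) (use n in simp_all)
    also have "\<dots> = 4 * n^2" by (simp add: power_mult_distrib)
    finally have "real (clique_number_PYR n) \<le> real (4 * n^2)" by (rule of_nat_mono)
    then show "real (clique_number_PYR n) \<le> 4 * real n ^ 2" by simp
  qed
qed


end
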